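(* Let $(X_n)_{n\le0}$ be a monotonic Markov process whose state spaces $A_n$ are totally ordered, with a given increasing representation $(f_n,U_n)_{n\le0}$, and let $Y_n(m,x)$ be the associated Propp–Wilson coupling. Let $\rho_0$ be a linear (compact) distance on $A_0$ and let $(\rho_n)_{n\le0}$ be the iterated Kantorovich pseudometrics starting from $\rho_0$. Then for every $n\le 0$, $\rho_n$ is a linear pseudometric on $A_n$, and for all $y,z\in A_n$, $\rho_n(y,z)$ equals the Kantorovich distance (induced by $\rho_0$) between $\mathcal{L}(X_0\mid X_n=y)$ and $\mathcal{L}(X_0\mid X_n=z)$, and $$\rho_n(y,z)=\mathbb{E}\big[\rho_0\big(Y_0(n,y),Y_0(n,z)\big)\big].$$
   Context: Markov process: $X_n$ valued in $A_n$, kernels $P_n(x,\cdot)=\mathcal{L}(X_n\mid X_{n-1}=x)$. $\mu\le_{st}\nu$ means there is a coupling with $X_\mu\le X_\nu$ a.s.; the process is monotonic if $x\le x'$ implies $P_n(x,\cdot)\le_{st}P_n(x',\cdot)$. An increasing representation is $(f_n,U_n)_{n\le0}$ with $(U_n)$ a sequence such that $U_n$ is independent of $\sigma(X_m,U_m;m\le n-1)$, $X_n=f_n(X_{n-1},U_n)$ a.s., $f_n(x,U_n)$ has law $P_n(x,\cdot)$ for each $x$, and $f_n(x,U_n)\le f_n(x',U_n)$ a.s. whenever $x\le x'$. Propp–Wilson coupling: $Y_m(m,x)=x$ and $Y_{k+1}(m,x)=f_{k+1}(Y_k(m,x),U_{k+1})$ for $m\le k<0$. A pseudometric $\rho$ on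 an ordered set is linear if $\rho(a,c)=\rho(a,b)+\rho(b,c)$ for $a\le b\le c$. Kantorovich pseudometric: $\rho'(\mu,\nu)=\inf\mathbb E[\rho(X_\mu,X_\nu)]$ over couplings. Iterated Kantorovich pseudometrics: $\rho_n$ on $A_n$ is defined recursively for $n<0$ by $\rho_n(x,x')=(\rho_{n+1})'\big(\mathcal{L}(X_{n+1}\mid X_n=x),\mathcal{L}(X_{n+1}\mid X_n=x')\big)$. *)

theory Defs
  imports "HOL-Probability.Probability"
begin

definition couplings :: "'a measure \<Rightarrow> 'a measure \<Rightarrow> 'a measure \<Rightarrow> ('a \<times> 'a) measure set" where
  "couplings S \<mu> \<nu> = {\<pi>. prob_space \<pi> \<and> sets \<pi> = sets (S \<Otimes>\<^sub>M S)
                        \<and> distr \<pi> S fst = \<mu> \<and> distr \<pi> S snd = \<nu>}"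

definition stoch_le :: "'a::linorder measure \<Rightarrow> 'a measure \<Rightarrow> 'a measure \<Rightarrow> bool" where
  "stoch_le S \<mu> \<nu> \<longleftrightarrow> (\<exists>\<pi>\<in>couplings S \<mu> \<nu>. AE p in \<pi>. fst p \<le> snd p)"

definition kantorovich :: "'a measure \<Rightarrow> ('a \<Rightarrow> 'a \<Rightarrow> real) \<Rightarrow> 'a measure \<Rightarrow> 'a measure \<Rightarrow> real" where
  "kantorovich S \<rho> \<mu> \<nu> =
     enn2real (INF \<pi>\<in>couplings S \<mu> \<nu>. \<integral>\<^sup>+ p. ennreal (\<rho> (fst p) (snd p)) \<partial>\<pi>)"

definition pseudometric_on :: "'a set \<Rightarrow> ('a \<Rightarrow> 'a \<Rightarrow> real) \<Rightarrow> bool" where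
  "pseudometric_on A \<rho> \<longleftrightarrow>
     (\<forall>x\<in>A. \<rho> x x = 0) \<and> (\<forall>x\<in>A. \<forall>y\<in>A. 0 \<le> \<rho> x y \<and> \<rho> x y = \<rho> y x) \<and>
     (\<forall>x\<in>A. \<forall>y\<in>A. \<forall>z\<in>A. \<rho> x z \<le> \<rho> x y + \<rho> y z)"

definition linear_on :: "'a::linorder set \<Rightarrow> ('a \<Rightarrow> 'a \<Rightarrow> real) \<Rightarrow> bool" where
  "linear_on A \<rho> \<longleftrightarrow>
     (\<forall>a\<in>A. \<forall>b\<in>A. \<forall>c\<in>A. a \<le> b \<and> b \<le> c \<longrightarrow> \<rho> a c = \<rho> a b + \<rho> b c)"

text \<open>Time n <= 0 is encoded as n = - k with k :: nat.
  iter_kant S P rho0 k is rho_{-k}; for n = -(k+1):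
  rho_n(x,x') = (rho_{n+1})'(P_{n+1}(x,.), P_{n+1}(x',.)).\<close>
fun iter_kant :: "(int \<Rightarrow> 'a measure) \<Rightarrow> (int \<Rightarrow> 'a \<Rightarrow> 'a measure) \<Rightarrow> ('a \<Rightarrow> 'a \<Rightarrow> real)
                   \<Rightarrow> nat \<Rightarrow> 'a \<Rightarrow> 'a \<Rightarrow> real" where
  "iter_kant S P \<rho>0 0 = \<rho>0"
| "iter_kant S P \<rho>0 (Suc k) =
     (\<lambda>x x'. kantorovich (S (- int k)) (iter_kant S P \<rho>0 k) (P (- int k) x) (P (- int k) x'))"

text \<open>Conditional law of X_0 given X_{-k} = y: composition of the transition kernels
  P_{-k+1}, ..., P_0 started at y.\<close>
fun cond_law :: "(int \<Rightarrow> 'a measure) \<Rightarrow> (int \<Rightarrow> 'a \<Rightarrow> 'a measure) \<Rightarrow> nat \<Rightarrow> 'a \<Rightarrow> 'a measure" where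
  "cond_law S P 0 y = return (S 0) y"
| "cond_law S P (Suc k) y = P (- int k) y \<bind> cond_law S P k"

text \<open>Propp--Wilson coupling: propp_wilson f U m x j \<omega> = Y_{m+j}(m,x)(\<omega>).\<close>
fun propp_wilson :: "(int \<Rightarrow> 'a \<Rightarrow> 'u \<Rightarrow> 'a) \<Rightarrow> (int \<Rightarrow> 'w \<Rightarrow> 'u) \<Rightarrow> int \<Rightarrow> 'a \<Rightarrow> nat \<Rightarrow> 'w \<Rightarrow> 'a" where
  "propp_wilson f U m x 0 \<omega> = x"
| "propp_wilson f U m x (Suc j) \<omega> =
     f (m + int j + 1) (propp_wilson f U m x j \<omega>) (U (m + int j + 1) \<omega>)"

end

theory Submission
  imports Defs
begin
lemma F_exists:
  fixes A :: "'a::linorder set" and N :: "'a measure"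
  assumes MS: "Metric_space A \<rho>" and cpt: "compact_space (Metric_space.mtopology A \<rho>)"
    and sN: "sets N = sigma_sets A {W. openin (Metric_space.mtopology A \<rho>) W}"
    and spN: "space N = A" and lin: "linear_on A \<rho>" and ne: "A \<noteq> {}"
  shows "\<exists>F B. F \<in> borel_measurable N \<and> (\<forall>a\<in>A. 0 \<le> F a \<and> F a \<le> B)
     \<and> (\<forall>a\<in>A. \<forall>b\<in>A. a \<le> b \<longrightarrow> F a \<le> F b) \<and> (\<forall>a\<in>A. \<forall>b\<in>A. \<rho> a b = \<bar>F a - F b\<bar>)"
proof -
  interpret Metric_space A \<rho> by fact
  have "mbounded A"
    using cpt compactin_imp_mbounded unfolding compact_space_def by simp
  then obtain B0 where B0: "\<And>x y. x \<in> A \<Longrightarrow> y \<in> A \<Longrightarrow> \<rho> x y \<le> B0"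
    unfolding mbounded_alt by blast
  obtain a0 where a0: "a0 \<in> A" using ne by blast
  define F where "F a = B0 + (if a0 \<le> a then \<rho> a0 a else - \<rho> a0 a)" for a
  have key: "\<rho> a b = F b - F a" if "a \<in> A" "b \<in> A" "a \<le> b" for a b
  proof -
    have l: "\<rho> x z = \<rho> x y + \<rho> y z" if "x \<in> A" "y\<in>A" "z\<in>A" "x \<le> y" "y \<le> z" for x y z
      using lin that unfolding linear_on_def by blast
    consider "a0 \<le> a" | "a < a0 \<and> a0 \<le> b" | "b < a0" using that by fastforce
    then show ?thesis
    proof cases
      case 1 then show ?thesis using l[of a0 a b] that a0 by (auto simp add: F_def)
    next
      case 2
      then have "\<not> a0 \<le> a" "a0 \<le> b" by auto
      then show ?thesis using l[of a a0 b] 2 that a0 commute[of a a0] by (simp add: F_def)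
    next
      case 3
      then have "\<not> a0 \<le> a" "\<not> a0 \<le> b" using that by auto
      then show ?thesis using l[of a b a0] 3 that a0 commute[of a a0] commute[of b a0]
        by (simp add: F_def)
    qed
  qed
  have mono: "\<forall>a\<in>A. \<forall>b\<in>A. a \<le> b \<longrightarrow> F a \<le> F b"
    using key nonneg by (metis diff_ge_0_iff_ge)
  have rho: "\<forall>a\<in>A. \<forall>b\<in>A. \<rho> a b = \<bar>F a - F b\<bar>"
  proof (intro ballI)
    fix a b assume ab: "a \<in> A" "b \<in> A"
    show "\<rho> a b = \<bar>F a - F b\<bar>"
    proof (cases "a \<le> b")
      case True then show ?thesis using key[OF ab] mono ab by auto
    next
      case False then have "b \<le> a" by simp
      then show ?thesis using key[of b a] mono ab commute[of a b] by auto
    qed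
  qed
  have bnd: "\<forall>a\<in>A. 0 \<le> F a \<and> F a \<le> 2 * B0"
  proof
    fix a assume a: "a \<in> A"
    have "0 \<le> \<rho> a0 a" "\<rho> a0 a \<le> B0" using B0[OF a0 a] by auto
    then show "0 \<le> F a \<and> F a \<le> 2 * B0"
    proof (cases "a0 \<le> a")
      case True then have "F a = B0 + \<rho> a0 a" by (simp add: F_def)
      then show ?thesis using \<open>0 \<le> \<rho> a0 a\<close> \<open>\<rho> a0 a \<le> B0\<close> by linarith
    next
      case False then have "F a = B0 - \<rho> a0 a" by (simp add: F_def)
      then show ?thesis using \<open>0 \<le> \<rho> a0 a\<close> \<open>\<rho> a0 a \<le> B0\<close> by linarith
    qed
  qed
  have opensets: "U \<in> sets N" if "openin mtopology U" for U
    using that sN by auto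
  have m1: "(\<lambda>a. \<rho> a0 a) \<in> borel_measurable N"
  proof (rule borel_measurableI_less)
    fix y
    have "openin mtopology {x\<in>A. \<rho> a0 x < y}"
      unfolding openin_mtopology
    proof (intro conjI allI impI)
      fix x assume x: "x \<in> {x\<in>A. \<rho> a0 x < y}"
      show "\<exists>r>0. mball x r \<subseteq> {x\<in>A. \<rho> a0 x < y}"
      proof (intro exI conjI)
        show "0 < y - \<rho> a0 x" using x by simp
        show "mball x (y - \<rho> a0 x) \<subseteq> {x\<in>A. \<rho> a0 x < y}"
        proof
          fix b assume b: "b \<in> mball x (y - \<rho> a0 x)"
          then have bA: "b \<in> A" and "\<rho> x b < y - \<rho> a0 x" by auto
          moreover have "\<rho> a0 b \<le> \<rho> a0 x + \<rho> x b" using triangle[OF a0, of x b] x bA by simp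
          ultimately show "b \<in> {x\<in>A. \<rho> a0 x < y}" by simp
        qed
      qed
    qed auto
    then show "{x\<in>space N. \<rho> a0 x < y} \<in> sets N" using opensets spN by simp
  qed
  have "openin mtopology {x\<in>A. x < a0}"
    unfolding openin_mtopology
  proof (intro conjI allI impI)
    fix x assume x: "x \<in> {x\<in>A. x < a0}"
    show "\<exists>r>0. mball x r \<subseteq> {x\<in>A. x < a0}"
    proof (intro exI conjI)
      show "0 < \<rho> x a0" using x a0 by auto
      show "mball x (\<rho> x a0) \<subseteq> {x\<in>A. x < a0}"
      proof
        fix b assume b: "b \<in> mball x (\<rho> x a0)"
        show "b \<in> {x\<in>A. x < a0}"
        proof (rule ccontr)
          assume "b \<notin> {x\<in>A. x < a0}"
          then have "a0 \<le> b" using b by auto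
          moreover have "x \<in> A" "x \<le> a0" "b \<in> A" using x b by auto
          ultimately have "\<rho> x b = \<rho> x a0 + \<rho> a0 b" using lin a0 unfolding linear_on_def
            by blast
          then show False using b nonneg[of a0 b] by simp
        qed
      qed
    qed
  qed auto
  then have "{x\<in>A. x < a0} \<in> sets N" using opensets by simp
  then have Ge: "{a. a0 \<le> a} \<inter> space N \<in> sets N"
  proof -
    assume h: "{x\<in>A. x < a0} \<in> sets N"
    have "{a. a0 \<le> a} \<inter> space N = space N - {x\<in>A. x < a0}" using spN by auto
    then show ?thesis using h by auto
  qed
  have "(\<lambda>a. B0 + (if a \<in> {a. a0 \<le> a} then \<rho> a0 a else - \<rho> a0 a)) \<in> borel_measurable N"
    using Ge m1 by (intro borel_measurable_add borel_measurable_const measurable_If_set borel_measurable_uminus) auto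
  then have "F \<in> borel_measurable N" by (simp add: F_def[abs_def])
  then show ?thesis using bnd mono rho by blast
qed

fun Gf :: "'w measure \<Rightarrow> (int \<Rightarrow> 'a \<Rightarrow> 'u \<Rightarrow> 'a) \<Rightarrow> (int \<Rightarrow> 'w \<Rightarrow> 'u) \<Rightarrow> ('a \<Rightarrow> real) \<Rightarrow> nat \<Rightarrow> 'a \<Rightarrow> real" where
  "Gf M f U F 0 a = F a"
| "Gf M f U F (Suc k) a = (\<integral>\<omega>. Gf M f U F k (f (- int k) a (U (- int k) \<omega>)) \<partial>M)"

fun Df :: "'w measure \<Rightarrow> (int \<Rightarrow> 'a \<Rightarrow> 'u \<Rightarrow> 'a) \<Rightarrow> (int \<Rightarrow> 'w \<Rightarrow> 'u) \<Rightarrow> ('a \<Rightarrow> real) \<Rightarrow> nat \<Rightarrow> 'a \<Rightarrow> 'a \<Rightarrow> real" where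
  "Df M f U F 0 a b = \<bar>F a - F b\<bar>"
| "Df M f U F (Suc k) a b = (\<integral>\<omega>. Df M f U F k (f (- int k) a (U (- int k) \<omega>)) (f (- int k) b (U (- int k) \<omega>)) \<partial>M)"

locale pwl =
  fixes M :: "'w measure"
    and S :: "int \<Rightarrow> 'a::linorder measure"
    and V :: "int \<Rightarrow> 'u measure"
    and X :: "int \<Rightarrow> 'w \<Rightarrow> 'a"
    and U :: "int \<Rightarrow> 'w \<Rightarrow> 'u"
    and f :: "int \<Rightarrow> 'a \<Rightarrow> 'u \<Rightarrow> 'a"
    and P :: "int \<Rightarrow> 'a \<Rightarrow> 'a measure"
    and F :: "'a \<Rightarrow> real" and B :: real
  assumes M: "prob_space M"
    and X_meas: "\<forall>n\<le>0. X n \<in> measurable M (S n)"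
    and P_kernel: "\<forall>n\<le>0. P n \<in> measurable (S (n - 1)) (prob_algebra (S n))"
    and monotonic: "\<forall>n\<le>0. \<forall>x\<in>space (S (n - 1)). \<forall>x'\<in>space (S (n - 1)).
                      x \<le> x' \<longrightarrow> stoch_le (S n) (P n x) (P n x')"
    and U_meas: "\<forall>n\<le>0. U n \<in> measurable M (V n)"
    and f_meas: "\<forall>n\<le>0. (\<lambda>(x, u). f n x u) \<in> measurable (S (n - 1) \<Otimes>\<^sub>M V n) (S n)"
    and U_indep: "\<forall>n\<le>0. prob_space.indep_set M (sets (vimage_algebra (space M) (U n) (V n)))
                      (sets (vimage_algebra (space M) (\<lambda>\<omega>. \<lambda>m\<in>{..n - 1}. (X m \<omega>, U m \<omega>))
                               (PiM {..n - 1} (\<lambda>m. S m \<Otimes>\<^sub>M V m))))"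
    and f_law: "\<forall>n\<le>0. \<forall>x\<in>space (S (n - 1)). P n x = distr M (S n) (\<lambda>\<omega>. f n x (U n \<omega>))"
    and f_incr: "\<forall>n\<le>0. \<forall>x\<in>space (S (n - 1)). \<forall>x'\<in>space (S (n - 1)).
                   x \<le> x' \<longrightarrow> (AE \<omega> in M. f n x (U n \<omega>) \<le> f n x' (U n \<omega>))"
    and F_meas: "F \<in> borel_measurable (S 0)"
    and F_bnd: "\<forall>a\<in>space (S 0). 0 \<le> F a \<and> F a \<le> B"
    and F_mono: "\<forall>a\<in>space (S 0). \<forall>b\<in>space (S 0). a \<le> b \<longrightarrow> F a \<le> F b"
begin

interpretation P: prob_space M by (rule M)

abbreviation "G \<equiv> Gf M f U F"
abbreviation "D \<equiv> Df M f U F"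

lemma fU_joint:
  assumes "n \<le> 0"
  shows "(\<lambda>(x, \<omega>). f n x (U n \<omega>)) \<in> measurable (S (n - 1) \<Otimes>\<^sub>M M) (S n)"
proof -
  have "(\<lambda>(x, \<omega>). f n x (U n \<omega>)) = (\<lambda>(x, u). f n x u) \<circ> (\<lambda>(x, \<omega>). (x, U n \<omega>))"
    by auto
  moreover have "(\<lambda>(x, \<omega>). (x, U n \<omega>)) \<in> measurable (S (n - 1) \<Otimes>\<^sub>M M) (S (n - 1) \<Otimes>\<^sub>M V n)"
    using U_meas assms by (auto intro!: measurable_Pair measurable_compose[OF measurable_snd] simp: split_beta')
  ultimately show ?thesis using f_meas assms by (metis measurable_comp)
qed

lemma fU_meas:
  assumes "n \<le> 0" "x \<in> space (S (n - 1))"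
  shows "(\<lambda>\<omega>. f n x (U n \<omega>)) \<in> measurable M (S n)"
  using measurable_Pair2[OF fU_joint[OF assms(1)] assms(2)] by simp

lemma fU_space:
  assumes "n \<le> 0" "x \<in> space (S (n - 1))" "\<omega> \<in> space M"
  shows "f n x (U n \<omega>) \<in> space (S n)"
  using measurable_space[OF fU_meas[OF assms(1,2)] assms(3)] .

lemma int_idx: "- int (Suc k) = - int k - 1" by simp

lemma G_basic: "G k \<in> borel_measurable (S (- int k)) \<and> (\<forall>a\<in>space (S (- int k)). 0 \<le> G k a \<and> G k a \<le> B)"
proof (induction k)
  case 0
  then show ?case using F_meas F_bnd by simp
next
  case (Suc k)
  have n: "- int k \<le> 0" by simp
  have jm: "(\<lambda>(a, \<omega>). G k (f (- int k) a (U (- int k) \<omega>))) \<in> borel_measurable (S (- int k - 1) \<Otimes>\<^sub>M M)"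
    using measurable_comp[OF fU_joint[OF n], of "G k" borel] Suc.IH by (simp add: comp_def split_beta')
  have "(\<lambda>a. \<integral>\<omega>. G k (f (- int k) a (U (- int k) \<omega>)) \<partial>M) \<in> borel_measurable (S (- int k - 1))"
    using P.borel_measurable_lebesgue_integral[of "\<lambda>a \<omega>. G k (f (- int k) a (U (- int k) \<omega>))"] jm
    by (simp add: split_beta')
  moreover
  have "0 \<le> G (Suc k) a \<and> G (Suc k) a \<le> B" if a: "a \<in> space (S (- int k - 1))" for a
  proof -
    have sp: "\<And>\<omega>. \<omega> \<in> space M \<Longrightarrow> 0 \<le> G k (f (- int k) a (U (- int k) \<omega>)) \<and> G k (f (- int k) a (U (- int k) \<omega>)) \<le> B"
      using Suc.IH fU_space[OF n a] by blast
    have m: "(\<lambda>\<omega>. G k (f (- int k) a (U (- int k) \<omega>))) \<in> borel_measurable M"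
      using measurable_comp[OF fU_meas[OF n a], of "G k" borel] Suc.IH by (simp add: comp_def)
    have int: "integrable M (\<lambda>\<omega>. G k (f (- int k) a (U (- int k) \<omega>)))"
      using sp m by (intro P.integrable_const_bound[where B=B]) auto
    have "0 \<le> (\<integral>\<omega>. G k (f (- int k) a (U (- int k) \<omega>)) \<partial>M)"
      using sp by (intro integral_nonneg_AE) auto
    moreover have "(\<integral>\<omega>. G k (f (- int k) a (U (- int k) \<omega>)) \<partial>M) \<le> (\<integral>\<omega>. B \<partial>M)"
      using sp int by (intro integral_mono_AE) auto
    ultimately show ?thesis by (simp add: P.prob_space)
  qed
  ultimately show ?case by (simp only: int_idx) simp
qed

lemma intg: "g \<in> borel_measurable M \<Longrightarrow> (\<And>\<omega>. \<omega> \<in> space M \<Longrightarrow> \<bar>g \<omega>\<bar> \<le> c) \<Longrightarrow> integrable M (g :: 'w \<Rightarrow> real)"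
  by (intro P.integrable_const_bound[where B=c]) auto

lemma GfU_meas:
  assumes "a \<in> space (S (- int k - 1))"
  shows "(\<lambda>\<omega>. G k (f (- int k) a (U (- int k) \<omega>))) \<in> borel_measurable M"
  using measurable_comp[OF fU_meas[OF _ assms], of "G k" borel] G_basic by (simp add: comp_def)

lemma GfU_int:
  assumes "a \<in> space (S (- int k - 1))"
  shows "integrable M (\<lambda>\<omega>. G k (f (- int k) a (U (- int k) \<omega>)))"
proof (rule intg[OF GfU_meas[OF assms]])
  fix \<omega> assume "\<omega> \<in> space M"
  then have "f (- int k) a (U (- int k) \<omega>) \<in> space (S (- int k))" using fU_space[OF _ assms] by simp
  then show "\<bar>G k (f (- int k) a (U (- int k) \<omega>))\<bar> \<le> B" using G_basic[of k] by auto
qed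

lemma G_mono: "\<forall>a\<in>space (S (- int k)). \<forall>b\<in>space (S (- int k)). a \<le> b \<longrightarrow> G k a \<le> G k b"
proof (induction k)
  case 0 then show ?case using F_mono by simp
next
  case (Suc k)
  show ?case unfolding int_idx
  proof (intro ballI impI)
    fix a b assume a: "a \<in> space (S (- int k - 1))" and b: "b \<in> space (S (- int k - 1))" and ab: "a \<le> b"
    have "AE \<omega> in M. f (- int k) a (U (- int k) \<omega>) \<le> f (- int k) b (U (- int k) \<omega>)"
      using f_incr a b ab by simp
    then have "AE \<omega> in M. G k (f (- int k) a (U (- int k) \<omega>)) \<le> G k (f (- int k) b (U (- int k) \<omega>))"
    proof (rule AE_mp[OF _ AE_I2])
      fix \<omega> assume "\<omega> \<in> space M"
      then show "f (- int k) a (U (- int k) \<omega>) \<le> f (- int k) b (U (- int k) \<omega>) \<longrightarrow>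
         G k (f (- int k) a (U (- int k) \<omega>)) \<le> G k (f (- int k) b (U (- int k) \<omega>))"
        using Suc.IH fU_space[OF _ a] fU_space[OF _ b] by simp
    qed
    then show "G (Suc k) a \<le> G (Suc k) b"
      using GfU_int[OF a] GfU_int[OF b] by (simp add: integral_mono_AE)
  qed
qed

lemma D_sym: "D k a b = D k b a"
  by (induction k arbitrary: a b) auto

lemma D_basic: "case_prod (D k) \<in> borel_measurable (S (- int k) \<Otimes>\<^sub>M S (- int k)) \<and>
   (\<forall>a\<in>space (S (- int k)). \<forall>b\<in>space (S (- int k)). 0 \<le> D k a b \<and> D k a b \<le> B)"
proof (induction k)
  case 0
  have "case_prod (D 0) = (\<lambda>p. \<bar>F (fst p) - F (snd p)\<bar>)" by auto
  moreover have "(\<lambda>p. \<bar>F (fst p) - F (snd p)\<bar>) \<in> borel_measurable (S 0 \<Otimes>\<^sub>M S 0)"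
    using F_meas by measurable
  ultimately have m: "case_prod (D 0) \<in> borel_measurable (S 0 \<Otimes>\<^sub>M S 0)" by simp
  have "\<forall>a\<in>space (S 0). \<forall>b\<in>space (S 0). 0 \<le> D 0 a b \<and> D 0 a b \<le> B"
  proof (intro ballI)
    fix a b assume a: "a \<in> space (S 0)" and b: "b \<in> space (S 0)"
    then have "0 \<le> F a" "F a \<le> B" "0 \<le> F b" "F b \<le> B" using F_bnd by auto
    then show "0 \<le> D 0 a b \<and> D 0 a b \<le> B" by (simp add: abs_le_iff)
  qed
  then show ?case using m by (simp del: Df.simps)
next
  case (Suc k)
  have n: "- int k \<le> 0" by simp
  let ?T = "S (- int k - 1) \<Otimes>\<^sub>M S (- int k - 1)"
  have m1: "(\<lambda>(p, \<omega>). f (- int k) (fst p) (U (- int k) \<omega>)) \<in> measurable (?T \<Otimes>\<^sub>M M) (S (- int k))"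
  proof -
    have "(\<lambda>(p, \<omega>). (fst p, \<omega>)) \<in> measurable (?T \<Otimes>\<^sub>M M) (S (- int k - 1) \<Otimes>\<^sub>M M)" by measurable
    from measurable_comp[OF this fU_joint[OF n]] show ?thesis by (simp add: comp_def split_beta')
  qed
  have m2: "(\<lambda>(p, \<omega>). f (- int k) (snd p) (U (- int k) \<omega>)) \<in> measurable (?T \<Otimes>\<^sub>M M) (S (- int k))"
  proof -
    have "(\<lambda>(p, \<omega>). (snd p, \<omega>)) \<in> measurable (?T \<Otimes>\<^sub>M M) (S (- int k - 1) \<Otimes>\<^sub>M M)" by measurable
    from measurable_comp[OF this fU_joint[OF n]] show ?thesis by (simp add: comp_def split_beta')
  qed
  have jm: "(\<lambda>(p, \<omega>). D k (f (- int k) (fst p) (U (- int k) \<omega>)) (f (- int k) (snd p) (U (- int k) \<omega>)))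
      \<in> borel_measurable (?T \<Otimes>\<^sub>M M)"
  proof -
    have "(\<lambda>x. ((\<lambda>(p, \<omega>). f (- int k) (fst p) (U (- int k) \<omega>)) x, (\<lambda>(p, \<omega>). f (- int k) (snd p) (U (- int k) \<omega>)) x))
       \<in> measurable (?T \<Otimes>\<^sub>M M) (S (- int k) \<Otimes>\<^sub>M S (- int k))"
      using m1 m2 by (rule measurable_Pair)
    from measurable_comp[OF this conjunct1[OF Suc.IH]] show ?thesis by (simp add: comp_def split_beta')
  qed
  have "(\<lambda>p. \<integral>\<omega>. D k (f (- int k) (fst p) (U (- int k) \<omega>)) (f (- int k) (snd p) (U (- int k) \<omega>)) \<partial>M)
     \<in> borel_measurable ?T"
    using P.borel_measurable_lebesgue_integral[of "\<lambda>p \<omega>. D k (f (- int k) (fst p) (U (- int k) \<omega>)) (f (- int k) (snd p) (U (- int k) \<omega>))"] jm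
    by (simp add: split_beta')
  then have meas: "case_prod (D (Suc k)) \<in> borel_measurable ?T" by (simp add: split_beta')
  have "0 \<le> D (Suc k) a b \<and> D (Suc k) a b \<le> B" if a: "a \<in> space (S (- int k - 1))" and b: "b \<in> space (S (- int k - 1))" for a b
  proof -
    have sp: "\<And>\<omega>. \<omega> \<in> space M \<Longrightarrow> 0 \<le> D k (f (- int k) a (U (- int k) \<omega>)) (f (- int k) b (U (- int k) \<omega>))
       \<and> D k (f (- int k) a (U (- int k) \<omega>)) (f (- int k) b (U (- int k) \<omega>)) \<le> B"
      using Suc.IH fU_space[OF n a] fU_space[OF n b] by blast
    have m: "(\<lambda>\<omega>. D k (f (- int k) a (U (- int k) \<omega>)) (f (- int k) b (U (- int k) \<omega>))) \<in> borel_measurable M"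
      using measurable_Pair2[OF jm, of "(a,b)"] a b by (simp add: space_pair_measure)
    have int: "integrable M (\<lambda>\<omega>. D k (f (- int k) a (U (- int k) \<omega>)) (f (- int k) b (U (- int k) \<omega>)))"
      using sp by (intro intg[OF m]) auto
    have "0 \<le> (\<integral>\<omega>. D k (f (- int k) a (U (- int k) \<omega>)) (f (- int k) b (U (- int k) \<omega>)) \<partial>M)"
      using sp by (intro integral_nonneg_AE) auto
    moreover have "(\<integral>\<omega>. D k (f (- int k) a (U (- int k) \<omega>)) (f (- int k) b (U (- int k) \<omega>)) \<partial>M) \<le> (\<integral>\<omega>. B \<partial>M)"
      using sp int by (intro integral_mono_AE) auto
    ultimately show ?thesis by (simp add: P.prob_space)
  qed
  then show ?case using meas by (simp only: int_idx) simp
qed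

lemma DfU_int:
  assumes "a \<in> space (S (- int k - 1))" "b \<in> space (S (- int k - 1))"
  shows "integrable M (\<lambda>\<omega>. D k (f (- int k) a (U (- int k) \<omega>)) (f (- int k) b (U (- int k) \<omega>)))"
proof -
  have m: "(\<lambda>\<omega>. D k (f (- int k) a (U (- int k) \<omega>)) (f (- int k) b (U (- int k) \<omega>))) \<in> borel_measurable M"
    using measurable_comp[OF measurable_Pair[OF fU_meas[OF _ assms(1)] fU_meas[OF _ assms(2)]] conjunct1[OF D_basic[of k]]]
    by (simp add: comp_def)
  show ?thesis
  proof (rule intg[OF m])
    fix \<omega> assume "\<omega> \<in> space M"
    then show "\<bar>D k (f (- int k) a (U (- int k) \<omega>)) (f (- int k) b (U (- int k) \<omega>))\<bar> \<le> B"
      using D_basic[of k] fU_space[OF _ assms(1)] fU_space[OF _ assms(2)] by fastforce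
  qed
qed

lemma D_G: "\<forall>a\<in>space (S (- int k)). \<forall>b\<in>space (S (- int k)). a \<le> b \<longrightarrow> D k a b = G k b - G k a"
proof (induction k)
  case 0 then show ?case using F_mono by simp
next
  case (Suc k)
  show ?case unfolding int_idx
  proof (intro ballI impI)
    fix a b assume a: "a \<in> space (S (- int k - 1))" and b: "b \<in> space (S (- int k - 1))" and ab: "a \<le> b"
    have "AE \<omega> in M. f (- int k) a (U (- int k) \<omega>) \<le> f (- int k) b (U (- int k) \<omega>)"
      using f_incr a b ab by simp
    then have "AE \<omega> in M. D k (f (- int k) a (U (- int k) \<omega>)) (f (- int k) b (U (- int k) \<omega>))
       = G k (f (- int k) b (U (- int k) \<omega>)) - G k (f (- int k) a (U (- int k) \<omega>))"
    proof (rule AE_mp[OF _ AE_I2])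
      fix \<omega> assume "\<omega> \<in> space M"
      then show "f (- int k) a (U (- int k) \<omega>) \<le> f (- int k) b (U (- int k) \<omega>) \<longrightarrow>
         D k (f (- int k) a (U (- int k) \<omega>)) (f (- int k) b (U (- int k) \<omega>))
       = G k (f (- int k) b (U (- int k) \<omega>)) - G k (f (- int k) a (U (- int k) \<omega>))"
        using Suc.IH fU_space[OF _ a] fU_space[OF _ b] by simp
    qed
    then have "(\<integral>\<omega>. D k (f (- int k) a (U (- int k) \<omega>)) (f (- int k) b (U (- int k) \<omega>)) \<partial>M)
       = (\<integral>\<omega>. G k (f (- int k) b (U (- int k) \<omega>)) - G k (f (- int k) a (U (- int k) \<omega>)) \<partial>M)"
      using DfU_int[OF a b] GfU_int[OF a] GfU_int[OF b]
      by (intro integral_cong_AE) auto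
    then have "D (Suc k) a b = (\<integral>\<omega>. G k (f (- int k) b (U (- int k) \<omega>)) - G k (f (- int k) a (U (- int k) \<omega>)) \<partial>M)"
      by (simp only: Df.simps)
    also have "\<dots> = G (Suc k) b - G (Suc k) a"
      unfolding Gf.simps by (rule Bochner_Integration.integral_diff[OF GfU_int[OF b] GfU_int[OF a]])
    finally show "D (Suc k) a b = G (Suc k) b - G (Suc k) a" .
  qed
qed

end

lemma coupling_basic:
  assumes "\<pi> \<in> couplings S \<mu> \<nu>"
  shows "prob_space \<pi>" "sets \<pi> = sets (S \<Otimes>\<^sub>M S)" "space \<pi> = space (S \<Otimes>\<^sub>M S)"
    "fst \<in> measurable \<pi> S" "snd \<in> measurable \<pi> S" "distr \<pi> S fst = \<mu>" "distr \<pi> S snd = \<nu>"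
proof -
  show p: "prob_space \<pi>" "sets \<pi> = sets (S \<Otimes>\<^sub>M S)" "distr \<pi> S fst = \<mu>" "distr \<pi> S snd = \<nu>"
    using assms by (auto simp: couplings_def)
  show "space \<pi> = space (S \<Otimes>\<^sub>M S)" using p(2) by (rule sets_eq_imp_space_eq)
  show "fst \<in> measurable \<pi> S" "snd \<in> measurable \<pi> S"
    using measurable_cong_sets[OF p(2) refl, of S] by auto
qed

lemma coupling_G:
  assumes \<pi>: "\<pi> \<in> couplings S \<mu> \<nu>" and G: "G \<in> borel_measurable S" and Gb: "\<forall>a\<in>space S. \<bar>G a\<bar> \<le> c"
  shows "integrable \<pi> (\<lambda>p. G (fst p))" "integrable \<pi> (\<lambda>p. G (snd p))"
    "(\<integral>p. G (fst p) \<partial>\<pi>) = (\<integral>a. G a \<partial>\<mu>)" "(\<integral>p. G (snd p) \<partial>\<pi>) = (\<integral>a. G a \<partial>\<nu>)"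
    "integrable \<pi> (\<lambda>p. \<bar>G (fst p) - G (snd p)\<bar>)"
    "(\<integral>\<^sup>+p. ennreal \<bar>G (fst p) - G (snd p)\<bar> \<partial>\<pi>) = ennreal (\<integral>p. \<bar>G (fst p) - G (snd p)\<bar> \<partial>\<pi>)"
proof -
  note cb = coupling_basic[OF \<pi>]
  interpret prob_space \<pi> by (rule cb(1))
  have sp: "fst p \<in> space S \<and> snd p \<in> space S" if "p \<in> space \<pi>" for p
  proof -
    have "p \<in> space S \<times> space S" using that cb(3) by (simp only: space_pair_measure)
    then show ?thesis by (simp only: mem_Times_iff)
  qed
  have m1: "(\<lambda>p. G (fst p)) \<in> borel_measurable \<pi>" using measurable_comp[OF cb(4) G] unfolding comp_def .
  have m2: "(\<lambda>p. G (snd p)) \<in> borel_measurable \<pi>" using measurable_comp[OF cb(5) G] unfolding comp_def .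
  have b1: "AE p in \<pi>. norm (G (fst p)) \<le> c"
    by (rule AE_I2) (use sp Gb in auto)
  have b2: "AE p in \<pi>. norm (G (snd p)) \<le> c"
    by (rule AE_I2) (use sp Gb in auto)
  show i1: "integrable \<pi> (\<lambda>p. G (fst p))"
    by (rule integrable_const_bound[OF b1 m1])
  show i2: "integrable \<pi> (\<lambda>p. G (snd p))"
    by (rule integrable_const_bound[OF b2 m2])
  show "(\<integral>p. G (fst p) \<partial>\<pi>) = (\<integral>a. G a \<partial>\<mu>)"
    using integral_distr[OF cb(4) G] cb(6) by simp
  show "(\<integral>p. G (snd p) \<partial>\<pi>) = (\<integral>a. G a \<partial>\<nu>)"
    using integral_distr[OF cb(5) G] cb(7) by simp
  show i3: "integrable \<pi> (\<lambda>p. \<bar>G (fst p) - G (snd p)\<bar>)"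
    by (intro integrable_abs Bochner_Integration.integrable_diff i1 i2)
  show "(\<integral>\<^sup>+p. ennreal \<bar>G (fst p) - G (snd p)\<bar> \<partial>\<pi>) = ennreal (\<integral>p. \<bar>G (fst p) - G (snd p)\<bar> \<partial>\<pi>)"
    by (rule nn_integral_eq_integral[OF i3]) simp
qed

lemma kant_lower:
  assumes \<pi>: "\<pi> \<in> couplings S \<mu> \<nu>" and G: "G \<in> borel_measurable S" and Gb: "\<forall>a\<in>space S. \<bar>G a\<bar> \<le> c"
  shows "ennreal \<bar>(\<integral>a. G a \<partial>\<mu>) - (\<integral>a. G a \<partial>\<nu>)\<bar> \<le> (\<integral>\<^sup>+p. ennreal \<bar>G (fst p) - G (snd p)\<bar> \<partial>\<pi>)"
proof -
  note c = coupling_G[OF assms]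
  have "\<bar>(\<integral>p. G (fst p) - G (snd p) \<partial>\<pi>)\<bar> \<le> (\<integral>p. \<bar>G (fst p) - G (snd p)\<bar> \<partial>\<pi>)"
    using integral_norm_bound[of \<pi> "\<lambda>p. G (fst p) - G (snd p)"] unfolding real_norm_def .
  moreover have "(\<integral>p. G (fst p) - G (snd p) \<partial>\<pi>) = (\<integral>a. G a \<partial>\<mu>) - (\<integral>a. G a \<partial>\<nu>)"
    using c by (simp add: Bochner_Integration.integral_diff)
  ultimately show ?thesis using c(6) by (simp add: ennreal_leI)
qed

lemma kant_ordered:
  assumes \<pi>: "\<pi> \<in> couplings S \<mu> \<nu>" and G: "G \<in> borel_measurable S" and Gb: "\<forall>a\<in>space S. \<bar>G a\<bar> \<le> c"
    and ord: "AE p in \<pi>. G (fst p) \<le> G (snd p)"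
  shows "(\<integral>\<^sup>+p. ennreal \<bar>G (fst p) - G (snd p)\<bar> \<partial>\<pi>) = ennreal \<bar>(\<integral>a. G a \<partial>\<mu>) - (\<integral>a. G a \<partial>\<nu>)\<bar>"
proof -
  note c = coupling_G[OF assms(1-3)]
  have "(\<integral>p. \<bar>G (fst p) - G (snd p)\<bar> \<partial>\<pi>) = (\<integral>p. G (snd p) - G (fst p) \<partial>\<pi>)"
    using c ord by (intro integral_cong_AE) auto
  also have "\<dots> = (\<integral>a. G a \<partial>\<nu>) - (\<integral>a. G a \<partial>\<mu>)"
    using c by (simp add: Bochner_Integration.integral_diff)
  finally have e: "(\<integral>p. \<bar>G (fst p) - G (snd p)\<bar> \<partial>\<pi>) = (\<integral>a. G a \<partial>\<nu>) - (\<integral>a. G a \<partial>\<mu>)" .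
  have "0 \<le> (\<integral>p. \<bar>G (fst p) - G (snd p)\<bar> \<partial>\<pi>)" by simp
  then have "(\<integral>p. \<bar>G (fst p) - G (snd p)\<bar> \<partial>\<pi>) = \<bar>(\<integral>a. G a \<partial>\<mu>) - (\<integral>a. G a \<partial>\<nu>)\<bar>"
    using e by linarith
  then show ?thesis using c(6) by simp
qed

lemma coupling_swap:
  assumes \<pi>: "\<pi> \<in> couplings S \<nu> \<mu>" and G: "G \<in> borel_measurable S"
  shows "distr \<pi> (S \<Otimes>\<^sub>M S) (\<lambda>p. (snd p, fst p)) \<in> couplings S \<mu> \<nu>"
    "(\<integral>\<^sup>+p. ennreal \<bar>G (fst p) - G (snd p)\<bar> \<partial>(distr \<pi> (S \<Otimes>\<^sub>M S) (\<lambda>p. (snd p, fst p))))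
      = (\<integral>\<^sup>+p. ennreal \<bar>G (fst p) - G (snd p)\<bar> \<partial>\<pi>)"
proof -
  note cb = coupling_basic[OF \<pi>]
  have sw: "(\<lambda>p. (snd p, fst p)) \<in> measurable \<pi> (S \<Otimes>\<^sub>M S)"
    by (rule measurable_Pair[OF cb(5) cb(4)])
  have "prob_space (distr \<pi> (S \<Otimes>\<^sub>M S) (\<lambda>p. (snd p, fst p)))"
    using prob_space.prob_space_distr[OF cb(1) sw] .
  moreover have "distr (distr \<pi> (S \<Otimes>\<^sub>M S) (\<lambda>p. (snd p, fst p))) S fst = \<mu>"
    using distr_distr[OF measurable_fst sw] cb(7) by (simp add: comp_def)
  moreover have "distr (distr \<pi> (S \<Otimes>\<^sub>M S) (\<lambda>p. (snd p, fst p))) S snd = \<nu>"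
    using distr_distr[OF measurable_snd sw] cb(6) by (simp add: comp_def)
  ultimately show "distr \<pi> (S \<Otimes>\<^sub>M S) (\<lambda>p. (snd p, fst p)) \<in> couplings S \<mu> \<nu>"
    by (simp add: couplings_def)
  have m: "(\<lambda>p. ennreal \<bar>G (fst p) - G (snd p)\<bar>) \<in> borel_measurable (S \<Otimes>\<^sub>M S)"
    using G by measurable
  show "(\<integral>\<^sup>+p. ennreal \<bar>G (fst p) - G (snd p)\<bar> \<partial>(distr \<pi> (S \<Otimes>\<^sub>M S) (\<lambda>p. (snd p, fst p))))
      = (\<integral>\<^sup>+p. ennreal \<bar>G (fst p) - G (snd p)\<bar> \<partial>\<pi>)"
  proof -
    have m': "(\<lambda>p. ennreal \<bar>G (fst p) - G (snd p)\<bar>) \<in> borel_measurable (distr \<pi> (S \<Otimes>\<^sub>M S) (\<lambda>p. (snd p, fst p)))"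
      using m by simp
    have "(\<integral>\<^sup>+p. ennreal \<bar>G (fst p) - G (snd p)\<bar> \<partial>(distr \<pi> (S \<Otimes>\<^sub>M S) (\<lambda>p. (snd p, fst p))))
       = (\<integral>\<^sup>+p. ennreal \<bar>G (snd p) - G (fst p)\<bar> \<partial>\<pi>)"
      using nn_integral_distr[OF sw m'] by simp
    also have "\<dots> = (\<integral>\<^sup>+p. ennreal \<bar>G (fst p) - G (snd p)\<bar> \<partial>\<pi>)"
      by (rule nn_integral_cong, rule arg_cong[where f=ennreal], rule abs_minus_commute)
    finally show ?thesis .
  qed
qed

lemma kant_G:
  assumes G: "G \<in> borel_measurable S" and Gb: "\<forall>a\<in>space S. \<bar>G a\<bar> \<le> c"
    and rho: "\<forall>a\<in>space S. \<forall>b\<in>space S. \<rho> a b = \<bar>G a - G b\<bar>"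
    and \<pi>0: "\<pi>0 \<in> couplings S \<mu> \<nu>"
    and val: "(\<integral>\<^sup>+p. ennreal \<bar>G (fst p) - G (snd p)\<bar> \<partial>\<pi>0) = ennreal \<bar>(\<integral>a. G a \<partial>\<mu>) - (\<integral>a. G a \<partial>\<nu>)\<bar>"
  shows "kantorovich S \<rho> \<mu> \<nu> = \<bar>(\<integral>a. G a \<partial>\<mu>) - (\<integral>a. G a \<partial>\<nu>)\<bar>"
proof -
  let ?r = "\<bar>(\<integral>a. G a \<partial>\<mu>) - (\<integral>a. G a \<partial>\<nu>)\<bar>"
  have eq: "(\<integral>\<^sup>+p. ennreal (\<rho> (fst p) (snd p)) \<partial>\<pi>) = (\<integral>\<^sup>+p. ennreal \<bar>G (fst p) - G (snd p)\<bar> \<partial>\<pi>)"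
    if "\<pi> \<in> couplings S \<mu> \<nu>" for \<pi>
  proof (rule nn_integral_cong)
    fix p assume "p \<in> space \<pi>"
    then have "p \<in> space S \<times> space S"
      using coupling_basic(3)[OF that] by (simp only: space_pair_measure)
    then have "fst p \<in> space S" "snd p \<in> space S" by (simp_all only: mem_Times_iff)
    then show "ennreal (\<rho> (fst p) (snd p)) = ennreal \<bar>G (fst p) - G (snd p)\<bar>" using rho by simp
  qed
  have "(INF \<pi>\<in>couplings S \<mu> \<nu>. \<integral>\<^sup>+ p. ennreal (\<rho> (fst p) (snd p)) \<partial>\<pi>) = ennreal ?r"
  proof (rule antisym)
    show "(INF \<pi>\<in>couplings S \<mu> \<nu>. \<integral>\<^sup>+ p. ennreal (\<rho> (fst p) (snd p)) \<partial>\<pi>) \<le> ennreal ?r"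
    proof -
      have "(INF \<pi>\<in>couplings S \<mu> \<nu>. \<integral>\<^sup>+ p. ennreal (\<rho> (fst p) (snd p)) \<partial>\<pi>) \<le> (\<integral>\<^sup>+ p. ennreal (\<rho> (fst p) (snd p)) \<partial>\<pi>0)"
        by (rule INF_lower[OF \<pi>0])
      then show ?thesis using val eq[OF \<pi>0] by simp
    qed
    show "ennreal ?r \<le> (INF \<pi>\<in>couplings S \<mu> \<nu>. \<integral>\<^sup>+ p. ennreal (\<rho> (fst p) (snd p)) \<partial>\<pi>)"
      using kant_lower[OF _ G Gb] eq by (intro INF_greatest) auto
  qed
  then show ?thesis unfolding kantorovich_def by simp
qed

context pwl begin

interpretation P: prob_space M by (rule M)

definition Zt :: "int \<Rightarrow> 'w \<Rightarrow> int \<Rightarrow> 'a \<times> 'u" where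
  "Zt t \<omega> = (\<lambda>m\<in>{..t - 1}. (X m \<omega>, U m \<omega>))"

abbreviation PMt :: "int \<Rightarrow> (int \<Rightarrow> 'a \<times> 'u) measure" where
  "PMt t \<equiv> PiM {..t - 1} (\<lambda>m. S m \<Otimes>\<^sub>M V m)"

lemma Zt_meas: "t \<le> 1 \<Longrightarrow> Zt t \<in> measurable M (PMt t)"
  unfolding Zt_def using X_meas U_meas
  by (intro measurable_restrict measurable_Pair) auto

lemma pw_meas:
  assumes "s + int j \<le> 0" "a \<in> space (S s)"
  shows "propp_wilson f U s a j \<in> measurable M (S (s + int j))"
  using assms(1)
proof (induction j)
  case 0 then show ?case using assms(2) by simp
next
  case (Suc j)
  let ?n = "s + int j + 1"
  have n: "?n \<le> 0" using Suc.prems by simp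
  have e: "?n - 1 = s + int j" by simp
  have IH: "propp_wilson f U s a j \<in> measurable M (S (?n - 1))" unfolding e
    using Suc.IH Suc.prems by simp
  have Un: "U ?n \<in> measurable M (V ?n)" by (rule U_meas[rule_format, OF n])
  have fm: "(\<lambda>(x, u). f ?n x u) \<in> measurable (S (?n - 1) \<Otimes>\<^sub>M V ?n) (S ?n)" by (rule f_meas[rule_format, OF n])
  have "(\<lambda>\<omega>. f ?n (propp_wilson f U s a j \<omega>) (U ?n \<omega>)) \<in> measurable M (S ?n)"
    using measurable_comp[OF measurable_Pair[OF IH Un] fm] by (simp only: comp_def split_conv)
  moreover have eq: "propp_wilson f U s a (Suc j) = (\<lambda>\<omega>. f ?n (propp_wilson f U s a j \<omega>) (U ?n \<omega>))"
    by (rule ext) simp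
  moreover have e2: "s + int (Suc j) = ?n" by simp
  ultimately show ?case by (simp only:)
qed

lemma pw_cong:
  "(\<And>i. i < j \<Longrightarrow> U1 (s + int i + 1) \<omega>1 = U2 (s + int i + 1) \<omega>2) \<Longrightarrow>
   propp_wilson f U1 s a j \<omega>1 = propp_wilson f U2 s a j \<omega>2"
  by (induction j) auto

lemma phi_meas:
  assumes "s + int j \<le> t - 1" "t \<le> 1" "a \<in> space (S s)"
  shows "propp_wilson f (\<lambda>m h. snd (h m)) s a j \<in> measurable (PMt t) (S (s + int j))"
  using assms(1)
proof (induction j)
  case 0 then show ?case using assms(3) by simp
next
  case (Suc j)
  let ?n = "s + int j + 1"
  have n: "?n \<le> 0" using Suc.prems assms(2) by simp
  have n2: "?n \<in> {..t - 1}" using Suc.prems by simp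
  have e: "?n - 1 = s + int j" by simp
  have IH: "propp_wilson f (\<lambda>m h. snd (h m)) s a j \<in> measurable (PMt t) (S (?n - 1))" unfolding e
    using Suc.IH Suc.prems by simp
  have c: "(\<lambda>h. h ?n) \<in> measurable (PMt t) (S ?n \<Otimes>\<^sub>M V ?n)"
    by (rule measurable_component_singleton[OF n2])
  have Un: "(\<lambda>h. snd (h ?n)) \<in> measurable (PMt t) (V ?n)"
    using measurable_comp[OF c measurable_snd] by (simp only: comp_def)
  have fm: "(\<lambda>(x, u). f ?n x u) \<in> measurable (S (?n - 1) \<Otimes>\<^sub>M V ?n) (S ?n)" by (rule f_meas[rule_format, OF n])
  have mm: "(\<lambda>h. f ?n (propp_wilson f (\<lambda>m h. snd (h m)) s a j h) (snd (h ?n))) \<in> measurable (PMt t) (S ?n)"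
    using measurable_comp[OF measurable_Pair[OF IH Un] fm] by (simp only: comp_def split_conv)
  have eq: "propp_wilson f (\<lambda>m h. snd (h m)) s a (Suc j) = (\<lambda>h. f ?n (propp_wilson f (\<lambda>m h. snd (h m)) s a j h) (snd (h ?n)))"
    by (rule ext) simp
  have e2: "s + int (Suc j) = ?n" by simp
  show ?case unfolding e2 eq by (rule mm)
qed

lemma pw_Zt:
  assumes "s + int j \<le> t - 1"
  shows "propp_wilson f U s a j \<omega> = propp_wilson f (\<lambda>m h. snd (h m)) s a j (Zt t \<omega>)"
  using assms by (intro pw_cong) (auto simp: Zt_def)

lemma indep_Zt:
  assumes t: "t \<le> 0" and psi: "\<psi> \<in> measurable (PMt t) N"
    and A: "A \<in> sets N" and B: "Ba \<in> sets (V t)"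
  shows "P.prob ((\<lambda>\<omega>. \<psi> (Zt t \<omega>)) -` A \<inter> space M \<inter> (U t -` Ba \<inter> space M))
    = P.prob ((\<lambda>\<omega>. \<psi> (Zt t \<omega>)) -` A \<inter> space M) * P.prob (U t -` Ba \<inter> space M)"
proof -
  have i1: "P.indep_set (sets (vimage_algebra (space M) (U t) (V t))) (sets (vimage_algebra (space M) (Zt t) (PMt t)))"
    using U_indep t unfolding Zt_def by simp
  have Zm: "Zt t \<in> measurable M (PMt t)" using Zt_meas t by simp
  have e: "(\<lambda>\<omega>. \<psi> (Zt t \<omega>)) -` A \<inter> space M = Zt t -` (\<psi> -` A \<inter> space (PMt t)) \<inter> space M"
    using measurable_space[OF Zm] by auto
  have a: "(\<lambda>\<omega>. \<psi> (Zt t \<omega>)) -` A \<inter> space M \<in> sets (vimage_algebra (space M) (Zt t) (PMt t))"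
    unfolding e by (rule in_vimage_algebra) (rule measurable_sets[OF psi A])
  have b: "U t -` Ba \<inter> space M \<in> sets (vimage_algebra (space M) (U t) (V t))"
    by (rule in_vimage_algebra[OF B])
  show ?thesis using P.indep_setD[OF i1 b a] by (simp add: Int_commute mult.commute)
qed

lemma joint_prod:
  assumes t: "t \<le> 0" and psi: "\<psi> \<in> measurable (PMt t) N"
  shows "distr M N (\<lambda>\<omega>. \<psi> (Zt t \<omega>)) \<Otimes>\<^sub>M distr M (V t) (U t)
       = distr M (N \<Otimes>\<^sub>M V t) (\<lambda>\<omega>. (\<psi> (Zt t \<omega>), U t \<omega>))"
proof -
  let ?W = "\<lambda>\<omega>. \<psi> (Zt t \<omega>)"
  have Wm: "?W \<in> measurable M N"
    using measurable_comp[OF Zt_meas psi] t by (simp add: comp_def)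
  have Um: "U t \<in> measurable M (V t)" using U_meas t by simp
  have WU: "(\<lambda>\<omega>. (?W \<omega>, U t \<omega>)) \<in> measurable M (N \<Otimes>\<^sub>M V t)"
    using Wm Um by (rule measurable_Pair)
  show ?thesis
  proof (rule pair_measure_eqI)
    show "sigma_finite_measure (distr M N ?W)"
      by (rule prob_space_imp_sigma_finite[OF P.prob_space_distr[OF Wm]])
    show "sigma_finite_measure (distr M (V t) (U t))"
      by (rule prob_space_imp_sigma_finite[OF P.prob_space_distr[OF Um]])
    show "sets (distr M N ?W \<Otimes>\<^sub>M distr M (V t) (U t)) = sets (distr M (N \<Otimes>\<^sub>M V t) (\<lambda>\<omega>. (?W \<omega>, U t \<omega>)))"
      by (simp add: sets_pair_measure_cong[OF sets_distr sets_distr])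
    fix A B assume A: "A \<in> sets (distr M N ?W)" and B: "B \<in> sets (distr M (V t) (U t))"
    then have A': "A \<in> sets N" and B': "B \<in> sets (V t)" by auto
    have AB: "A \<times> B \<in> sets (N \<Otimes>\<^sub>M V t)" using A' B' by simp
    have "emeasure (distr M (N \<Otimes>\<^sub>M V t) (\<lambda>\<omega>. (?W \<omega>, U t \<omega>))) (A \<times> B)
        = emeasure M ((\<lambda>\<omega>. (?W \<omega>, U t \<omega>)) -` (A \<times> B) \<inter> space M)"
      by (rule emeasure_distr[OF WU AB])
    also have "(\<lambda>\<omega>. (?W \<omega>, U t \<omega>)) -` (A \<times> B) \<inter> space M = ?W -` A \<inter> space M \<inter> (U t -` B \<inter> space M)"
      by auto
    finally have r: "emeasure (distr M (N \<Otimes>\<^sub>M V t) (\<lambda>\<omega>. (?W \<omega>, U t \<omega>))) (A \<times> B)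
       = ennreal (P.prob (?W -` A \<inter> space M) * P.prob (U t -` B \<inter> space M))"
      using indep_Zt[OF t psi A' B'] by (simp add: P.emeasure_eq_measure)
    have l1: "emeasure (distr M N ?W) A = ennreal (P.prob (?W -` A \<inter> space M))"
      using emeasure_distr[OF Wm A'] by (simp add: P.emeasure_eq_measure)
    have l2: "emeasure (distr M (V t) (U t)) B = ennreal (P.prob (U t -` B \<inter> space M))"
      using emeasure_distr[OF Um B'] by (simp add: P.emeasure_eq_measure)
    show "emeasure (distr M N ?W) A * emeasure (distr M (V t) (U t)) B
        = emeasure (distr M (N \<Otimes>\<^sub>M V t) (\<lambda>\<omega>. (?W \<omega>, U t \<omega>))) (A \<times> B)"
      using l1 l2 r by (simp add: ennreal_mult)
  qed
qed

lemma step_nn: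
  assumes t: "t \<le> 0" and psi: "\<psi> \<in> measurable (PMt t) N"
    and g: "g \<in> borel_measurable (N \<Otimes>\<^sub>M V t)"
  shows "(\<integral>\<^sup>+\<omega>. g (\<psi> (Zt t \<omega>), U t \<omega>) \<partial>M) = (\<integral>\<^sup>+\<omega>. (\<integral>\<^sup>+\<omega>'. g (\<psi> (Zt t \<omega>), U t \<omega>') \<partial>M) \<partial>M)"
proof -
  let ?W = "\<lambda>\<omega>. \<psi> (Zt t \<omega>)"
  have Wm: "?W \<in> measurable M N"
    using measurable_comp[OF Zt_meas psi] t by (simp add: comp_def)
  have Um: "U t \<in> measurable M (V t)" using U_meas t by simp
  have J: "distr M N ?W \<Otimes>\<^sub>M distr M (V t) (U t) = distr M (N \<Otimes>\<^sub>M V t) (\<lambda>\<omega>. (?W \<omega>, U t \<omega>))"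
    by (rule joint_prod[OF t psi])
  interpret LU: prob_space "distr M (V t) (U t)" by (rule P.prob_space_distr[OF Um])
  have WU: "(\<lambda>\<omega>. (?W \<omega>, U t \<omega>)) \<in> measurable M (N \<Otimes>\<^sub>M V t)"
    using Wm Um by (rule measurable_Pair)
  have "(\<integral>\<^sup>+\<omega>. g (?W \<omega>, U t \<omega>) \<partial>M) = (\<integral>\<^sup>+p. g p \<partial>distr M (N \<Otimes>\<^sub>M V t) (\<lambda>\<omega>. (?W \<omega>, U t \<omega>)))"
    using nn_integral_distr[OF WU] g by simp
  also have "\<dots> = (\<integral>\<^sup>+p. g p \<partial>(distr M N ?W \<Otimes>\<^sub>M distr M (V t) (U t)))"
    using J by simp
  also have "\<dots> = (\<integral>\<^sup>+w. \<integral>\<^sup>+u. g (w, u) \<partial>distr M (V t) (U t) \<partial>distr M N ?W)"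
  proof -
    have "g \<in> borel_measurable (distr M N ?W \<Otimes>\<^sub>M distr M (V t) (U t))"
      using g by (simp add: measurable_cong_sets[OF sets_pair_measure_cong[OF sets_distr sets_distr] refl])
    then show ?thesis by (rule LU.nn_integral_fst[symmetric])
  qed
  also have "\<dots> = (\<integral>\<^sup>+w. \<integral>\<^sup>+\<omega>'. g (w, U t \<omega>') \<partial>M \<partial>distr M N ?W)"
  proof (rule nn_integral_cong)
    fix w assume "w \<in> space (distr M N ?W)"
    then have w: "w \<in> space N" by simp
    have "(\<lambda>u. g (w, u)) \<in> borel_measurable (V t)"
      using measurable_Pair2[OF g w] .
    then show "(\<integral>\<^sup>+u. g (w, u) \<partial>distr M (V t) (U t)) = (\<integral>\<^sup>+\<omega>'. g (w, U t \<omega>') \<partial>M)"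
      using nn_integral_distr[OF Um] by simp
  qed
  also have "\<dots> = (\<integral>\<^sup>+\<omega>. (\<integral>\<^sup>+\<omega>'. g (?W \<omega>, U t \<omega>') \<partial>M) \<partial>M)"
  proof -
    have gm: "(\<lambda>(w, \<omega>'). g (w, U t \<omega>')) \<in> borel_measurable (N \<Otimes>\<^sub>M M)"
    proof -
      have "(\<lambda>(w, \<omega>'). (w, U t \<omega>')) \<in> measurable (N \<Otimes>\<^sub>M M) (N \<Otimes>\<^sub>M V t)"
        using Um by (auto intro!: measurable_Pair measurable_compose[OF measurable_snd] simp: split_beta')
      from measurable_comp[OF this g] show ?thesis by (simp add: comp_def split_beta')
    qed
    have "(\<lambda>w. \<integral>\<^sup>+\<omega>'. g (w, U t \<omega>') \<partial>M) \<in> borel_measurable N"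
      using P.borel_measurable_nn_integral_fst[OF gm] by simp
    then show ?thesis using nn_integral_distr[OF Wm] by simp
  qed
  finally show ?thesis .
qed

end

context pwl begin

interpretation P: prob_space M by (rule M)

lemma P_sub: "n \<le> 0 \<Longrightarrow> P n \<in> measurable (S (n - 1)) (subprob_algebra (S n))"
  using P_kernel measurable_prob_algebraD by blast

lemma CL_meas: "cond_law S P i \<in> measurable (S (- int i)) (subprob_algebra (S 0))"
proof (induction i)
  case 0 then show ?case by (simp add: return_measurable)
next
  case (Suc i)
  have e: "(\<lambda>y. P (- int i) y \<bind> cond_law S P i) = cond_law S P (Suc i)" by (rule ext) simp
  have "(\<lambda>y. P (- int i) y \<bind> cond_law S P i) \<in> measurable (S (- int i - 1)) (subprob_algebra (S 0))"
    by (rule measurable_bind2[OF P_sub Suc.IH]) simp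
  then show ?case unfolding e by (simp only: int_idx)
qed

lemma distr_const_return:
  assumes "a \<in> space N"
  shows "distr M N (\<lambda>\<omega>. a) = return N a"
proof (rule measure_eqI)
  show "sets (distr M N (\<lambda>\<omega>. a)) = sets (return N a)" by simp
  fix A assume A: "A \<in> sets (distr M N (\<lambda>\<omega>. a))"
  then have A': "A \<in> sets N" by simp
  have "emeasure (distr M N (\<lambda>\<omega>. a)) A = emeasure M ((\<lambda>\<omega>. a) -` A \<inter> space M)"
    using emeasure_distr[OF measurable_const[OF assms] A'] .
  also have "\<dots> = indicator A a"
    by (cases "a \<in> A") (simp_all add: P.emeasure_space_1)
  finally show "emeasure (distr M N (\<lambda>\<omega>. a)) A = emeasure (return N a) A"
    using A' by simp
qed

lemma law_step:
  assumes t: "s + int j + 1 \<le> 0" and a: "a \<in> space (S s)"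
  shows "distr M (S (s + int j + 1)) (propp_wilson f U s a (Suc j))
       = distr M (S (s + int j)) (propp_wilson f U s a j) \<bind> P (s + int j + 1)"
proof -
  let ?t = "s + int j + 1"
  have e: "?t - 1 = s + int j" by simp
  have Yj: "propp_wilson f U s a j \<in> measurable M (S (s + int j))"
    using pw_meas[of s j a] t a by simp
  have Yj1: "propp_wilson f U s a (Suc j) \<in> measurable M (S ?t)"
  proof -
    have e3: "s + int (Suc j) = ?t" by simp
    show ?thesis using pw_meas[of s "Suc j" a, unfolded e3] t a by simp
  qed
  have Pk: "P ?t \<in> measurable (S (s + int j)) (subprob_algebra (S ?t))"
    using P_sub[of ?t] t by (simp only: e)
  have ne: "space (distr M (S (s + int j)) (propp_wilson f U s a j)) \<noteq> {}"
    using measurable_space[OF Yj] P.not_empty by auto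
  have phi: "propp_wilson f (\<lambda>m h. snd (h m)) s a j \<in> measurable (PMt ?t) (S (s + int j))"
    using phi_meas[of s j ?t a] t a by simp
  have fm: "(\<lambda>(x, u). f ?t x u) \<in> measurable (S (s + int j) \<Otimes>\<^sub>M V ?t) (S ?t)"
    using f_meas[rule_format, of ?t] t by (simp only: e)
  show ?thesis
  proof (rule measure_eqI)
    show "sets (distr M (S ?t) (propp_wilson f U s a (Suc j))) =
          sets (distr M (S (s + int j)) (propp_wilson f U s a j) \<bind> P ?t)"
      using sets_bind[OF sets_kernel[OF Pk] ne] by simp
    fix A assume "A \<in> sets (distr M (S ?t) (propp_wilson f U s a (Suc j)))"
    then have A: "A \<in> sets (S ?t)" by simp
    have g: "(\<lambda>(x, u). indicator A (f ?t x u) :: ennreal) \<in> borel_measurable (S (s + int j) \<Otimes>\<^sub>M V ?t)"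
      using measurable_comp[OF fm borel_measurable_indicator[OF A]] by (simp add: comp_def split_beta')
    have "emeasure (distr M (S ?t) (propp_wilson f U s a (Suc j))) A
       = (\<integral>\<^sup>+\<omega>. indicator A (propp_wilson f U s a (Suc j) \<omega>) \<partial>M)"
    proof -
      have "emeasure (distr M (S ?t) (propp_wilson f U s a (Suc j))) A = (\<integral>\<^sup>+x. indicator A x \<partial>distr M (S ?t) (propp_wilson f U s a (Suc j)))"
        using A by simp
      also have "\<dots> = (\<integral>\<^sup>+\<omega>. indicator A (propp_wilson f U s a (Suc j) \<omega>) \<partial>M)"
        using A by (intro nn_integral_distr[OF Yj1]) simp
      finally show ?thesis .
    qed
    also have "\<dots> = (\<integral>\<^sup>+\<omega>. (\<lambda>(x, u). indicator A (f ?t x u)) (propp_wilson f (\<lambda>m h. snd (h m)) s a j (Zt ?t \<omega>), U ?t \<omega>) \<partial>M)"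
      using pw_Zt[of s j ?t a] by simp
    also have "\<dots> = (\<integral>\<^sup>+\<omega>. (\<integral>\<^sup>+\<omega>'. (\<lambda>(x, u). indicator A (f ?t x u)) (propp_wilson f (\<lambda>m h. snd (h m)) s a j (Zt ?t \<omega>), U ?t \<omega>') \<partial>M) \<partial>M)"
      by (rule step_nn[OF t phi g])
    also have "\<dots> = (\<integral>\<^sup>+\<omega>. emeasure (P ?t (propp_wilson f U s a j \<omega>)) A \<partial>M)"
    proof (rule nn_integral_cong)
      fix \<omega> assume \<omega>: "\<omega> \<in> space M"
      let ?x = "propp_wilson f U s a j \<omega>"
      have x: "?x \<in> space (S (?t - 1))" using measurable_space[OF Yj \<omega>] by simp
      have fx: "(\<lambda>\<omega>. f ?t ?x (U ?t \<omega>)) \<in> measurable M (S ?t)" by (rule fU_meas[OF t x])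
      have "(\<integral>\<^sup>+\<omega>'. indicator A (f ?t ?x (U ?t \<omega>')) \<partial>M) = emeasure (distr M (S ?t) (\<lambda>\<omega>. f ?t ?x (U ?t \<omega>))) A"
      proof -
        have "emeasure (distr M (S ?t) (\<lambda>\<omega>. f ?t ?x (U ?t \<omega>))) A = (\<integral>\<^sup>+y. indicator A y \<partial>distr M (S ?t) (\<lambda>\<omega>. f ?t ?x (U ?t \<omega>)))"
          using A by simp
        also have "\<dots> = (\<integral>\<^sup>+\<omega>'. indicator A (f ?t ?x (U ?t \<omega>')) \<partial>M)"
          using A by (intro nn_integral_distr[OF fx]) simp
        finally show ?thesis by simp
      qed
      also have "\<dots> = emeasure (P ?t ?x) A" using f_law t x by simp
      finally show "(\<integral>\<^sup>+\<omega>'. (\<lambda>(x, u). indicator A (f ?t x u)) (propp_wilson f (\<lambda>m h. snd (h m)) s a j (Zt ?t \<omega>), U ?t \<omega>') \<partial>M)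
          = emeasure (P ?t (propp_wilson f U s a j \<omega>)) A"
        using pw_Zt[of s j ?t a \<omega>] by simp
    qed
    also have "\<dots> = (\<integral>\<^sup>+x. emeasure (P ?t x) A \<partial>distr M (S (s + int j)) (propp_wilson f U s a j))"
    proof -
      have "(\<lambda>x. emeasure (P ?t x) A) \<in> borel_measurable (S (s + int j))"
        using measurable_comp[OF Pk measurable_emeasure_subprob_algebra[OF A]] by (simp add: comp_def)
      then show ?thesis using nn_integral_distr[OF Yj] by simp
    qed
    also have "\<dots> = emeasure (distr M (S (s + int j)) (propp_wilson f U s a j) \<bind> P ?t) A"
      using emeasure_bind[OF ne _ A, of "P ?t"] Pk by simp
    finally show "emeasure (distr M (S ?t) (propp_wilson f U s a (Suc j))) A =
          emeasure (distr M (S (s + int j)) (propp_wilson f U s a j) \<bind> P ?t) A" .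
  qed
qed

end

context pwl begin

interpretation P: prob_space M by (rule M)

lemma law_cl:
  "a \<in> space (S (- int (i + j))) \<Longrightarrow>
   distr M (S (- int i)) (propp_wilson f U (- int (i + j)) a j) \<bind> cond_law S P i = cond_law S P (i + j) a"
proof (induction j arbitrary: i a)
  case 0
  have e: "propp_wilson f U (- int i) a 0 = (\<lambda>\<omega>. a)" by (rule ext) simp
  show ?case using 0 unfolding e
    by (simp add: distr_const_return bind_return[OF CL_meas])
next
  case (Suc j)
  let ?s = "- int (i + Suc j)"
  have e1: "?s + int j + 1 = - int i" by simp
  have e2: "?s + int j = - int i - 1" by simp
  have e3: "?s = - int (Suc i + j)" by simp
  have e4: "- int (Suc i) = - int i - 1" by simp
  have ls: "distr M (S (- int i)) (propp_wilson f U ?s a (Suc j))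
       = distr M (S (- int i - 1)) (propp_wilson f U ?s a j) \<bind> P (- int i)"
    using law_step[of ?s j a, unfolded e1 e2] Suc.prems by simp
  have Pk: "P (- int i) \<in> measurable (S (- int i - 1)) (subprob_algebra (S (- int i)))"
    using P_sub[of "- int i"] by simp
  have c: "(\<lambda>x. P (- int i) x \<bind> cond_law S P i) = cond_law S P (Suc i)" by (rule ext) simp
  have "distr M (S (- int i)) (propp_wilson f U ?s a (Suc j)) \<bind> cond_law S P i
      = distr M (S (- int i - 1)) (propp_wilson f U ?s a j) \<bind> (\<lambda>x. P (- int i) x \<bind> cond_law S P i)"
  proof -
    have Pk': "P (- int i) \<in> measurable (distr M (S (- int i - 1)) (propp_wilson f U ?s a j)) (subprob_algebra (S (- int i)))"
      using Pk by (simp add: measurable_cong_sets[OF sets_distr refl])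
    show ?thesis unfolding ls by (rule bind_assoc[OF Pk' CL_meas])
  qed
  also have "\<dots> = distr M (S (- int (Suc i))) (propp_wilson f U (- int (Suc i + j)) a j) \<bind> cond_law S P (Suc i)"
    unfolding c e4 e3 ..
  also have "\<dots> = cond_law S P (Suc i + j) a"
    by (rule Suc.IH) (use Suc.prems e3 in simp)
  also have "Suc i + j = i + Suc j" by simp
  finally show ?case by (simp only: e3)
qed

lemma transport:
  "a \<in> space (S (- int (i + j))) \<Longrightarrow> b \<in> space (S (- int (i + j))) \<Longrightarrow>
   (\<integral>\<^sup>+\<omega>. ennreal (D i (propp_wilson f U (- int (i + j)) a j \<omega>) (propp_wilson f U (- int (i + j)) b j \<omega>)) \<partial>M)
     = ennreal (D (i + j) a b)"
proof (induction j arbitrary: i)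
  case 0
  then show ?case by (simp add: P.emeasure_space_1)
next
  case (Suc j)
  let ?s = "- int (i + Suc j)"
  let ?t = "- int i"
  have e1: "?s + int j + 1 = ?t" by simp
  have e2: "?s + int j = ?t - 1" by simp
  have e3: "?s = - int (Suc i + j)" by simp
  have t: "?t \<le> 0" by simp
  have Ya: "propp_wilson f U ?s a j \<in> measurable M (S (?t - 1))"
    using pw_meas[of ?s j a, unfolded e2] Suc.prems by simp
  have Yb: "propp_wilson f U ?s b j \<in> measurable M (S (?t - 1))"
    using pw_meas[of ?s j b, unfolded e2] Suc.prems by simp
  let ?pa = "propp_wilson f (\<lambda>m h. snd (h m)) ?s a j"
  let ?pb = "propp_wilson f (\<lambda>m h. snd (h m)) ?s b j"
  have pa: "?pa \<in> measurable (PMt ?t) (S (?t - 1))"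
    using phi_meas[of ?s j ?t a, unfolded e2] Suc.prems by simp
  have pb: "?pb \<in> measurable (PMt ?t) (S (?t - 1))"
    using phi_meas[of ?s j ?t b, unfolded e2] Suc.prems by simp
  have psi: "(\<lambda>h. (?pa h, ?pb h)) \<in> measurable (PMt ?t) (S (?t - 1) \<Otimes>\<^sub>M S (?t - 1))"
    using pa pb by (rule measurable_Pair)
  have fm: "(\<lambda>(x, u). f ?t x u) \<in> measurable (S (?t - 1) \<Otimes>\<^sub>M V ?t) (S ?t)"
    by (rule f_meas[rule_format, OF t])
  let ?T = "(S (?t - 1) \<Otimes>\<^sub>M S (?t - 1)) \<Otimes>\<^sub>M V ?t"
  have m1: "(\<lambda>(p, u). f ?t (fst p) u) \<in> measurable ?T (S ?t)"
  proof -
    have "(\<lambda>(p, u). (fst p, u)) \<in> measurable ?T (S (?t - 1) \<Otimes>\<^sub>M V ?t)" by measurable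
    from measurable_comp[OF this fm] show ?thesis by (simp add: comp_def split_beta')
  qed
  have m2: "(\<lambda>(p, u). f ?t (snd p) u) \<in> measurable ?T (S ?t)"
  proof -
    have "(\<lambda>(p, u). (snd p, u)) \<in> measurable ?T (S (?t - 1) \<Otimes>\<^sub>M V ?t)" by measurable
    from measurable_comp[OF this fm] show ?thesis by (simp add: comp_def split_beta')
  qed
  have Dm: "case_prod (D i) \<in> borel_measurable (S ?t \<Otimes>\<^sub>M S ?t)" using D_basic[of i] by simp
  have g: "(\<lambda>(p, u). ennreal (D i (f ?t (fst p) u) (f ?t (snd p) u))) \<in> borel_measurable ?T"
  proof -
    have "(\<lambda>x. ((\<lambda>(p, u). f ?t (fst p) u) x, (\<lambda>(p, u). f ?t (snd p) u) x)) \<in> measurable ?T (S ?t \<Otimes>\<^sub>M S ?t)"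
      using m1 m2 by (rule measurable_Pair)
    from measurable_comp[OF this Dm] have "(\<lambda>(p, u). D i (f ?t (fst p) u) (f ?t (snd p) u)) \<in> borel_measurable ?T"
      by (simp add: comp_def split_beta')
    then show ?thesis by measurable
  qed
  have "(\<integral>\<^sup>+\<omega>. ennreal (D i (propp_wilson f U ?s a (Suc j) \<omega>) (propp_wilson f U ?s b (Suc j) \<omega>)) \<partial>M)
      = (\<integral>\<^sup>+\<omega>. (\<lambda>(p, u). ennreal (D i (f ?t (fst p) u) (f ?t (snd p) u))) ((\<lambda>h. (?pa h, ?pb h)) (Zt ?t \<omega>), U ?t \<omega>) \<partial>M)"
  proof (rule nn_integral_cong)
    fix \<omega> assume "\<omega> \<in> space M"
    have "propp_wilson f U ?s a j \<omega> = ?pa (Zt ?t \<omega>)" "propp_wilson f U ?s b j \<omega> = ?pb (Zt ?t \<omega>)"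
      using pw_Zt[of ?s j ?t] by simp_all
    then show "ennreal (D i (propp_wilson f U ?s a (Suc j) \<omega>) (propp_wilson f U ?s b (Suc j) \<omega>))
      = (\<lambda>(p, u). ennreal (D i (f ?t (fst p) u) (f ?t (snd p) u))) ((\<lambda>h. (?pa h, ?pb h)) (Zt ?t \<omega>), U ?t \<omega>)"
      using e1 by simp
  qed
  also have "\<dots> = (\<integral>\<^sup>+\<omega>. (\<integral>\<^sup>+\<omega>'. (\<lambda>(p, u). ennreal (D i (f ?t (fst p) u) (f ?t (snd p) u))) ((\<lambda>h. (?pa h, ?pb h)) (Zt ?t \<omega>), U ?t \<omega>') \<partial>M) \<partial>M)"
    by (rule step_nn[OF t psi g])
  also have "\<dots> = (\<integral>\<^sup>+\<omega>. ennreal (D (Suc i) (propp_wilson f U ?s a j \<omega>) (propp_wilson f U ?s b j \<omega>)) \<partial>M)"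
  proof (rule nn_integral_cong)
    fix \<omega> assume \<omega>: "\<omega> \<in> space M"
    let ?x = "propp_wilson f U ?s a j \<omega>" and ?y = "propp_wilson f U ?s b j \<omega>"
    have x: "?x \<in> space (S (- int i - 1))" using measurable_space[OF Ya \<omega>] by simp
    have y: "?y \<in> space (S (- int i - 1))" using measurable_space[OF Yb \<omega>] by simp
    have eqs: "?pa (Zt ?t \<omega>) = ?x" "?pb (Zt ?t \<omega>) = ?y"
      using pw_Zt[of ?s j ?t] by simp_all
    have "(\<integral>\<^sup>+\<omega>'. ennreal (D i (f ?t ?x (U ?t \<omega>')) (f ?t ?y (U ?t \<omega>'))) \<partial>M)
        = ennreal (\<integral>\<omega>'. D i (f ?t ?x (U ?t \<omega>')) (f ?t ?y (U ?t \<omega>')) \<partial>M)"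
    proof (rule nn_integral_eq_integral[OF DfU_int[OF x y]])
      show "AE \<omega>' in M. 0 \<le> D i (f ?t ?x (U ?t \<omega>')) (f ?t ?y (U ?t \<omega>'))"
        using D_basic[of i] fU_space[OF t x] fU_space[OF t y] by (intro AE_I2) auto
    qed
    then show "(\<integral>\<^sup>+\<omega>'. (\<lambda>(p, u). ennreal (D i (f ?t (fst p) u) (f ?t (snd p) u))) ((\<lambda>h. (?pa h, ?pb h)) (Zt ?t \<omega>), U ?t \<omega>') \<partial>M)
        = ennreal (D (Suc i) ?x ?y)"
      using eqs by simp
  qed
  also have "\<dots> = ennreal (D (Suc i + j) a b)"
    using Suc.IH[of "Suc i"] Suc.prems unfolding e3 by simp
  finally show ?case by simp
qed

end

lemma exists_val:
  assumes G: "G \<in> borel_measurable S" and Gb: "\<forall>a\<in>space S. \<bar>G a\<bar> \<le> c"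
    and mono: "\<forall>a\<in>space S. \<forall>b\<in>space S. a \<le> b \<longrightarrow> G a \<le> (G b :: real)"
    and st: "stoch_le S \<mu> \<nu> \<or> stoch_le S \<nu> \<mu>"
  shows "\<exists>\<pi>0\<in>couplings S \<mu> \<nu>. (\<integral>\<^sup>+p. ennreal \<bar>G (fst p) - G (snd p)\<bar> \<partial>\<pi>0) = ennreal \<bar>(\<integral>a. G a \<partial>\<mu>) - (\<integral>a. G a \<partial>\<nu>)\<bar>"
proof -
  have ordG: "AE p in \<pi>. G (fst p) \<le> G (snd p)" if \<pi>: "\<pi> \<in> couplings S \<mu>' \<nu>'" and o: "AE p in \<pi>. fst p \<le> snd p" for \<pi> \<mu>' \<nu>'
  proof -
    have "AE p in \<pi>. p \<in> space \<pi>" by (rule AE_I2) simp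
    then show ?thesis using o
    proof (eventually_elim)
      case (elim p)
      then have "p \<in> space S \<times> space S" using coupling_basic(3)[OF \<pi>] by (simp only: space_pair_measure)
      then have "fst p \<in> space S" "snd p \<in> space S" by (simp_all only: mem_Times_iff)
      then show ?case using mono elim by blast
    qed
  qed
  from st show ?thesis
  proof
    assume "stoch_le S \<mu> \<nu>"
    then obtain \<pi> where \<pi>: "\<pi> \<in> couplings S \<mu> \<nu>" and o: "AE p in \<pi>. fst p \<le> snd p"
      unfolding stoch_le_def by blast
    show ?thesis using kant_ordered[OF \<pi> G Gb ordG[OF \<pi> o]] \<pi> by blast
  next
    assume "stoch_le S \<nu> \<mu>"
    then obtain \<pi> where \<pi>: "\<pi> \<in> couplings S \<nu> \<mu>" and o: "AE p in \<pi>. fst p \<le> snd p"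
      unfolding stoch_le_def by blast
    have v: "(\<integral>\<^sup>+p. ennreal \<bar>G (fst p) - G (snd p)\<bar> \<partial>\<pi>) = ennreal \<bar>(\<integral>a. G a \<partial>\<nu>) - (\<integral>a. G a \<partial>\<mu>)\<bar>"
      by (rule kant_ordered[OF \<pi> G Gb ordG[OF \<pi> o]])
    have "\<bar>(\<integral>a. G a \<partial>\<nu>) - (\<integral>a. G a \<partial>\<mu>)\<bar> = \<bar>(\<integral>a. G a \<partial>\<mu>) - (\<integral>a. G a \<partial>\<nu>)\<bar>"
      by (rule abs_minus_commute)
    then show ?thesis using coupling_swap[OF \<pi> G] v by metis
  qed
qed

context pwl begin

interpretation P: prob_space M by (rule M)

lemma G_int_P:
  assumes y: "y \<in> space (S (- int k - 1))"
  shows "(\<integral>x. G k x \<partial>P (- int k) y) = G (Suc k) y"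
proof -
  have "P (- int k) y = distr M (S (- int k)) (\<lambda>\<omega>. f (- int k) y (U (- int k) \<omega>))"
    using f_law y by simp
  then show ?thesis
    using integral_distr[OF fU_meas[OF _ y] conjunct1[OF G_basic[of k]]] by simp
qed

lemma iter_G:
  assumes rho: "\<forall>a\<in>space (S 0). \<forall>b\<in>space (S 0). \<rho>0 a b = \<bar>F a - F b\<bar>"
  shows "\<forall>y\<in>space (S (- int k)). \<forall>z\<in>space (S (- int k)). iter_kant S P \<rho>0 k y z = \<bar>G k y - G k z\<bar>"
proof (induction k)
  case 0 then show ?case using rho by simp
next
  case (Suc k)
  show ?case unfolding int_idx
  proof (intro ballI)
    fix y z assume y: "y \<in> space (S (- int k - 1))" and z: "z \<in> space (S (- int k - 1))"
    have Gm: "G k \<in> borel_measurable (S (- int k))" using G_basic by blast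
    have Gb: "\<forall>a\<in>space (S (- int k)). \<bar>G k a\<bar> \<le> B" using G_basic[of k] by auto
    have st: "stoch_le (S (- int k)) (P (- int k) y) (P (- int k) z) \<or> stoch_le (S (- int k)) (P (- int k) z) (P (- int k) y)"
    proof (cases "y \<le> z")
      case True then show ?thesis using monotonic y z by simp
    next
      case False then have "z \<le> y" by simp
      then show ?thesis using monotonic y z by simp
    qed
    obtain \<pi>0 where \<pi>0: "\<pi>0 \<in> couplings (S (- int k)) (P (- int k) y) (P (- int k) z)"
      and val: "(\<integral>\<^sup>+p. ennreal \<bar>G k (fst p) - G k (snd p)\<bar> \<partial>\<pi>0)
          = ennreal \<bar>(\<integral>a. G k a \<partial>P (- int k) y) - (\<integral>a. G k a \<partial>P (- int k) z)\<bar>"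
      using exists_val[OF Gm Gb G_mono st] by blast
    have "kantorovich (S (- int k)) (iter_kant S P \<rho>0 k) (P (- int k) y) (P (- int k) z)
        = \<bar>(\<integral>a. G k a \<partial>P (- int k) y) - (\<integral>a. G k a \<partial>P (- int k) z)\<bar>"
      by (rule kant_G[OF Gm Gb Suc.IH \<pi>0 val])
    then show "iter_kant S P \<rho>0 (Suc k) y z = \<bar>G (Suc k) y - G (Suc k) z\<bar>"
      using G_int_P[OF y] G_int_P[OF z] by simp
  qed
qed

lemma CL_nn:
  "y \<in> space (S (- int k)) \<Longrightarrow> (\<integral>\<^sup>+x. ennreal (F x) \<partial>cond_law S P k y) = ennreal (G k y)"
proof (induction k arbitrary: y)
  case 0
  then show ?case using F_meas by (simp add: nn_integral_return)
next
  case (Suc k)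
  have y: "y \<in> space (S (- int k - 1))" using Suc.prems by (simp only: int_idx)
  have Py: "P (- int k) y \<in> space (prob_algebra (S (- int k)))"
    using measurable_space[OF P_kernel[rule_format, of "- int k"] y] by simp
  then have sPy: "sets (P (- int k) y) = sets (S (- int k))" by (simp add: space_prob_algebra)
  have CLm: "cond_law S P k \<in> measurable (P (- int k) y) (subprob_algebra (S 0))"
    using CL_meas[of k] by (simp add: measurable_cong_sets[OF sPy refl])
  have "(\<integral>\<^sup>+x. ennreal (F x) \<partial>cond_law S P (Suc k) y)
      = (\<integral>\<^sup>+x. (\<integral>\<^sup>+u. ennreal (F u) \<partial>cond_law S P k x) \<partial>P (- int k) y)"
    using nn_integral_bind[OF _ CLm, of "\<lambda>x. ennreal (F x)"] F_meas by simp
  also have "\<dots> = (\<integral>\<^sup>+x. ennreal (G k x) \<partial>P (- int k) y)"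
  proof (rule nn_integral_cong)
    fix x assume "x \<in> space (P (- int k) y)"
    then have "x \<in> space (S (- int k))" using sets_eq_imp_space_eq[OF sPy] by simp
    then show "(\<integral>\<^sup>+u. ennreal (F u) \<partial>cond_law S P k x) = ennreal (G k x)" by (rule Suc.IH)
  qed
  also have "\<dots> = (\<integral>\<^sup>+\<omega>. ennreal (G k (f (- int k) y (U (- int k) \<omega>))) \<partial>M)"
  proof -
    have "P (- int k) y = distr M (S (- int k)) (\<lambda>\<omega>. f (- int k) y (U (- int k) \<omega>))"
      using f_law y by simp
    moreover have "(\<lambda>x. ennreal (G k x)) \<in> borel_measurable (S (- int k))"
      using G_basic[of k] by simp
    ultimately show ?thesis using nn_integral_distr[OF fU_meas[OF _ y]] by simp
  qed
  also have "\<dots> = ennreal (G (Suc k) y)"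
  proof -
    have "AE \<omega> in M. 0 \<le> G k (f (- int k) y (U (- int k) \<omega>))"
      using G_basic[of k] fU_space[OF _ y] by (intro AE_I2) auto
    then show ?thesis using nn_integral_eq_integral[OF GfU_int[OF y]] by simp
  qed
  finally show ?case .
qed

lemma CL_int:
  assumes y: "y \<in> space (S (- int k))"
  shows "(\<integral>x. F x \<partial>cond_law S P k y) = G k y"
proof -
  have "cond_law S P k y \<in> space (subprob_algebra (S 0))"
    using measurable_space[OF CL_meas y] .
  then have sub: "subprob_space (cond_law S P k y)" and sc: "sets (cond_law S P k y) = sets (S 0)"
    by (auto simp: space_subprob_algebra)
  interpret C: subprob_space "cond_law S P k y" by (rule sub)
  have sp: "space (cond_law S P k y) = space (S 0)" using sets_eq_imp_space_eq[OF sc] .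
  have Fm: "F \<in> borel_measurable (cond_law S P k y)"
    using F_meas by (simp add: measurable_cong_sets[OF sc refl])
  have int: "integrable (cond_law S P k y) F"
    using F_bnd sp by (intro C.integrable_const_bound[where B=B] AE_I2 Fm) auto
  have "ennreal (\<integral>x. F x \<partial>cond_law S P k y) = (\<integral>\<^sup>+x. ennreal (F x) \<partial>cond_law S P k y)"
    using F_bnd sp by (intro nn_integral_eq_integral[symmetric] int AE_I2) auto
  also have "\<dots> = ennreal (G k y)" by (rule CL_nn[OF y])
  finally have e: "ennreal (\<integral>x. F x \<partial>cond_law S P k y) = ennreal (G k y)" .
  have "0 \<le> (\<integral>x. F x \<partial>cond_law S P k y)"
    using F_bnd sp by (intro integral_nonneg_AE AE_I2) auto
  moreover have "0 \<le> G k y" using G_basic[of k] y by auto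
  ultimately show ?thesis using e by simp
qed

end

context pwl begin

interpretation P: prob_space M by (rule M)

lemma D_abs:
  assumes y: "y \<in> space (S (- int k))" and z: "z \<in> space (S (- int k))"
  shows "D k y z = \<bar>G k y - G k z\<bar>"
proof (cases "y \<le> z")
  case True
  then have "D k y z = G k z - G k y" "G k y \<le> G k z" using D_G[of k] G_mono[of k] y z by auto
  then show ?thesis by simp
next
  case False
  then have "z \<le> y" by simp
  then have "D k z y = G k y - G k z" "G k z \<le> G k y" using D_G[of k] G_mono[of k] y z by auto
  then show ?thesis using D_sym[of k y z] by simp
qed

lemma main_k:
  assumes rho: "\<forall>a\<in>space (S 0). \<forall>b\<in>space (S 0). \<rho>0 a b = \<bar>F a - F b\<bar>"
    and y: "y \<in> space (S (- int k))" and z: "z \<in> space (S (- int k))"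
  shows "kantorovich (S 0) \<rho>0 (cond_law S P k y) (cond_law S P k z) = \<bar>G k y - G k z\<bar>"
    and "(\<integral>\<omega>. \<rho>0 (propp_wilson f U (- int k) y k \<omega>) (propp_wilson f U (- int k) z k \<omega>) \<partial>M) = \<bar>G k y - G k z\<bar>"
proof -
  let ?Yy = "propp_wilson f U (- int k) y k" and ?Yz = "propp_wilson f U (- int k) z k"
  have e0: "- int k + int k = 0" by simp
  have Ym: "?Yy \<in> measurable M (S 0)" using pw_meas[of "- int k" k y, unfolded e0] y by simp
  have Zm: "?Yz \<in> measurable M (S 0)" using pw_meas[of "- int k" k z, unfolded e0] z by simp
  have DK: "D k y z = \<bar>G k y - G k z\<bar>" by (rule D_abs[OF y z])
  have tr: "(\<integral>\<^sup>+\<omega>. ennreal \<bar>F (?Yy \<omega>) - F (?Yz \<omega>)\<bar> \<partial>M) = ennreal (D k y z)"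
    using transport[where i=0 and j=k and a=y and b=z] y z by simp
  have Dm: "(\<lambda>\<omega>. \<bar>F (?Yy \<omega>) - F (?Yz \<omega>)\<bar>) \<in> borel_measurable M"
    using measurable_comp[OF Ym F_meas] measurable_comp[OF Zm F_meas] by (simp add: comp_def)
  have Dsp: "0 \<le> \<bar>F (?Yy \<omega>) - F (?Yz \<omega>)\<bar> \<and> \<bar>F (?Yy \<omega>) - F (?Yz \<omega>)\<bar> \<le> B" if "\<omega> \<in> space M" for \<omega>
  proof -
    have "?Yy \<omega> \<in> space (S 0)" "?Yz \<omega> \<in> space (S 0)"
      using measurable_space[OF Ym that] measurable_space[OF Zm that] by auto
    then have "0 \<le> F (?Yy \<omega>)" "F (?Yy \<omega>) \<le> B" "0 \<le> F (?Yz \<omega>)" "F (?Yz \<omega>) \<le> B" using F_bnd by auto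
    then show ?thesis by (simp add: abs_le_iff)
  qed
  have int: "integrable M (\<lambda>\<omega>. \<bar>F (?Yy \<omega>) - F (?Yz \<omega>)\<bar>)"
    by (rule intg[OF Dm]) (use Dsp in auto)
  have "ennreal (\<integral>\<omega>. \<bar>F (?Yy \<omega>) - F (?Yz \<omega>)\<bar> \<partial>M) = ennreal (D k y z)"
    using nn_integral_eq_integral[OF int] tr by simp
  moreover have "0 \<le> (\<integral>\<omega>. \<bar>F (?Yy \<omega>) - F (?Yz \<omega>)\<bar> \<partial>M)" by simp
  moreover have "0 \<le> D k y z" using DK by simp
  ultimately have I: "(\<integral>\<omega>. \<bar>F (?Yy \<omega>) - F (?Yz \<omega>)\<bar> \<partial>M) = D k y z" by simp
  have "(\<integral>\<omega>. \<rho>0 (?Yy \<omega>) (?Yz \<omega>) \<partial>M) = (\<integral>\<omega>. \<bar>F (?Yy \<omega>) - F (?Yz \<omega>)\<bar> \<partial>M)"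
  proof (rule Bochner_Integration.integral_cong[OF refl])
    fix \<omega> assume "\<omega> \<in> space M"
    then have "?Yy \<omega> \<in> space (S 0)" "?Yz \<omega> \<in> space (S 0)"
      using measurable_space[OF Ym] measurable_space[OF Zm] by auto
    then show "\<rho>0 (?Yy \<omega>) (?Yz \<omega>) = \<bar>F (?Yy \<omega>) - F (?Yz \<omega>)\<bar>" using rho by simp
  qed
  then show "(\<integral>\<omega>. \<rho>0 (?Yy \<omega>) (?Yz \<omega>) \<partial>M) = \<bar>G k y - G k z\<bar>" using I DK by simp
  let ?\<pi> = "distr M (S 0 \<Otimes>\<^sub>M S 0) (\<lambda>\<omega>. (?Yy \<omega>, ?Yz \<omega>))"
  have pm: "(\<lambda>\<omega>. (?Yy \<omega>, ?Yz \<omega>)) \<in> measurable M (S 0 \<Otimes>\<^sub>M S 0)" using Ym Zm by (rule measurable_Pair)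
  have c0: "cond_law S P 0 = return (S 0)" by (rule ext) simp
  have law: "distr M (S 0) (propp_wilson f U (- int k) a k) = cond_law S P k a" if a: "a \<in> space (S (- int k))" for a
  proof -
    have "distr M (S (- int 0)) (propp_wilson f U (- int (0 + k)) a k) \<bind> cond_law S P 0 = cond_law S P (0 + k) a"
      by (rule law_cl) (use a in simp)
    then show ?thesis unfolding c0 by (simp add: bind_return'')
  qed
  have cpl: "?\<pi> \<in> couplings (S 0) (cond_law S P k y) (cond_law S P k z)"
  proof -
    have "prob_space ?\<pi>" by (rule P.prob_space_distr[OF pm])
    moreover have "distr ?\<pi> (S 0) fst = cond_law S P k y"
      using distr_distr[OF measurable_fst pm] law[OF y] by (simp add: comp_def)
    moreover have "distr ?\<pi> (S 0) snd = cond_law S P k z"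
      using distr_distr[OF measurable_snd pm] law[OF z] by (simp add: comp_def)
    ultimately show ?thesis by (simp add: couplings_def)
  qed
  have Fb: "\<forall>a\<in>space (S 0). \<bar>F a\<bar> \<le> B" using F_bnd by auto
  have val: "(\<integral>\<^sup>+p. ennreal \<bar>F (fst p) - F (snd p)\<bar> \<partial>?\<pi>)
      = ennreal \<bar>(\<integral>a. F a \<partial>cond_law S P k y) - (\<integral>a. F a \<partial>cond_law S P k z)\<bar>"
  proof -
    have m: "(\<lambda>p. ennreal \<bar>F (fst p) - F (snd p)\<bar>) \<in> borel_measurable (S 0 \<Otimes>\<^sub>M S 0)"
      using F_meas by measurable
    have "(\<integral>\<^sup>+p. ennreal \<bar>F (fst p) - F (snd p)\<bar> \<partial>?\<pi>) = (\<integral>\<^sup>+\<omega>. ennreal \<bar>F (?Yy \<omega>) - F (?Yz \<omega>)\<bar> \<partial>M)"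
      using nn_integral_distr[OF pm] m by simp
    also have "\<dots> = ennreal \<bar>G k y - G k z\<bar>" using tr DK by simp
    finally show ?thesis using CL_int[OF y] CL_int[OF z] by simp
  qed
  have "kantorovich (S 0) \<rho>0 (cond_law S P k y) (cond_law S P k z)
      = \<bar>(\<integral>a. F a \<partial>cond_law S P k y) - (\<integral>a. F a \<partial>cond_law S P k z)\<bar>"
    by (rule kant_G[OF F_meas Fb rho cpl val])
  then show "kantorovich (S 0) \<rho>0 (cond_law S P k y) (cond_law S P k z) = \<bar>G k y - G k z\<bar>"
    using CL_int[OF y] CL_int[OF z] by simp
qed

end

theorem proposition3p12:
  fixes M :: "'w measure"
    and S :: "int \<Rightarrow> 'a::linorder measure"
    and V :: "int \<Rightarrow> 'u measure"
    and X :: "int \<Rightarrow> 'w \<Rightarrow> 'a"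
    and U :: "int \<Rightarrow> 'w \<Rightarrow> 'u"
    and f :: "int \<Rightarrow> 'a \<Rightarrow> 'u \<Rightarrow> 'a"
    and P :: "int \<Rightarrow> 'a \<Rightarrow> 'a measure"
    and \<rho>0 :: "'a \<Rightarrow> 'a \<Rightarrow> real"
  assumes M: "prob_space M"
    \<comment> \<open>the Markov process (X_n)_{n<=0} with state spaces A_n = space (S n) and kernels P_n\<close>
    and X_meas: "\<forall>n\<le>0. X n \<in> measurable M (S n)"
    and P_kernel: "\<forall>n\<le>0. P n \<in> measurable (S (n - 1)) (prob_algebra (S n))"
    and Markov: "\<forall>n\<le>0. \<forall>A\<in>sets (vimage_algebra (space M) (\<lambda>\<omega>. \<lambda>m\<in>{..n - 1}. X m \<omega>) (PiM {..n - 1} S)).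
                   \<forall>B\<in>sets (S n).
                     emeasure M (A \<inter> (X n -` B \<inter> space M)) =
                     (\<integral>\<^sup>+\<omega>. emeasure (P n (X (n - 1) \<omega>)) B * indicator A \<omega> \<partial>M)"
    \<comment> \<open>monotonicity\<close>
    and monotonic: "\<forall>n\<le>0. \<forall>x\<in>space (S (n - 1)). \<forall>x'\<in>space (S (n - 1)).
                      x \<le> x' \<longrightarrow> stoch_le (S n) (P n x) (P n x')"
    \<comment> \<open>increasing representation (f_n, U_n)_{n<=0}\<close>
    and U_meas: "\<forall>n\<le>0. U n \<in> measurable M (V n)"
    and f_meas: "\<forall>n\<le>0. (\<lambda>(x, u). f n x u) \<in> measurable (S (n - 1) \<Otimes>\<^sub>M V n) (S n)"
    and U_indep: "\<forall>n\<le>0. prob_space.indep_set M (sets (vimage_algebra (space M) (U n) (V n)))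
                      (sets (vimage_algebra (space M) (\<lambda>\<omega>. \<lambda>m\<in>{..n - 1}. (X m \<omega>, U m \<omega>))
                               (PiM {..n - 1} (\<lambda>m. S m \<Otimes>\<^sub>M V m))))"
    and X_rec: "\<forall>n\<le>0. AE \<omega> in M. X n \<omega> = f n (X (n - 1) \<omega>) (U n \<omega>)"
    and f_law: "\<forall>n\<le>0. \<forall>x\<in>space (S (n - 1)). P n x = distr M (S n) (\<lambda>\<omega>. f n x (U n \<omega>))"
    and f_incr: "\<forall>n\<le>0. \<forall>x\<in>space (S (n - 1)). \<forall>x'\<in>space (S (n - 1)).
                   x \<le> x' \<longrightarrow> (AE \<omega> in M. f n x (U n \<omega>) \<le> f n x' (U n \<omega>))"
    \<comment> \<open>rho_0 is a linear compact distance on A_0, A_0 carrying its Borel sigma-algebra\<close>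
    and rho0_metric: "Metric_space (space (S 0)) \<rho>0"
    and rho0_compact: "compact_space (Metric_space.mtopology (space (S 0)) \<rho>0)"
    and rho0_borel: "sets (S 0) = sigma_sets (space (S 0)) {W. openin (Metric_space.mtopology (space (S 0)) \<rho>0) W}"
    and rho0_linear: "linear_on (space (S 0)) \<rho>0"
  shows "\<forall>n\<le>0.
           pseudometric_on (space (S n)) (iter_kant S P \<rho>0 (nat (- n))) \<and>
           linear_on (space (S n)) (iter_kant S P \<rho>0 (nat (- n))) \<and>
           (\<forall>y\<in>space (S n). \<forall>z\<in>space (S n).
              iter_kant S P \<rho>0 (nat (- n)) y z =
                kantorovich (S 0) \<rho>0 (cond_law S P (nat (- n)) y) (cond_law S P (nat (- n)) z) \<and>
              iter_kant S P \<rho>0 (nat (- n)) y z =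
                (\<integral>\<omega>. \<rho>0 (propp_wilson f U n y (nat (- n)) \<omega>) (propp_wilson f U n z (nat (- n)) \<omega>) \<partial>M))"
proof -
  interpret PM: prob_space M by (rule M)
  have ne: "space (S 0) \<noteq> {}"
    using measurable_space[OF X_meas[rule_format, of 0]] PM.not_empty by auto
  obtain F B where Fm: "F \<in> borel_measurable (S 0)" and Fb: "\<forall>a\<in>space (S 0). 0 \<le> F a \<and> F a \<le> B"
    and Fmono: "\<forall>a\<in>space (S 0). \<forall>b\<in>space (S 0). a \<le> b \<longrightarrow> F a \<le> F b"
    and rho: "\<forall>a\<in>space (S 0). \<forall>b\<in>space (S 0). \<rho>0 a b = \<bar>F a - F b\<bar>"
    using F_exists[OF rho0_metric rho0_compact rho0_borel refl rho0_linear ne] by blast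
  interpret pwl M S V X U f P F B
    using M X_meas P_kernel monotonic U_meas f_meas U_indep f_law f_incr Fm Fb Fmono
    by (unfold_locales) auto
  show ?thesis
  proof (intro allI impI)
    fix n :: int assume "n \<le> 0"
    then obtain k where nk: "n = - int k" by (metis add.inverse_inverse neg_0_le_iff_le nonneg_eq_int)
    have kk': "nat (- (- int k)) = k" by simp
    have iter: "\<forall>y\<in>space (S (- int k)). \<forall>z\<in>space (S (- int k)). iter_kant S P \<rho>0 k y z = \<bar>Gf M f U F k y - Gf M f U F k z\<bar>"
      by (rule iter_G[OF rho])
    have mono: "\<forall>a\<in>space (S (- int k)). \<forall>b\<in>space (S (- int k)). a \<le> b \<longrightarrow> Gf M f U F k a \<le> Gf M f U F k b"
      by (rule G_mono)
    have pm: "pseudometric_on (space (S (- int k))) (iter_kant S P \<rho>0 k)"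
      unfolding pseudometric_on_def using iter by (auto simp: abs_minus_commute)
    have lin: "linear_on (space (S (- int k))) (iter_kant S P \<rho>0 k)"
      unfolding linear_on_def
    proof (intro ballI impI)
      fix a b c assume abc: "a \<in> space (S (- int k))" "b \<in> space (S (- int k))" "c \<in> space (S (- int k))" "a \<le> b \<and> b \<le> c"
      then have "Gf M f U F k a \<le> Gf M f U F k b" "Gf M f U F k b \<le> Gf M f U F k c" using mono by auto
      then show "iter_kant S P \<rho>0 k a c = iter_kant S P \<rho>0 k a b + iter_kant S P \<rho>0 k b c"
        using iter abc by simp
    qed
    have rest: "\<forall>y\<in>space (S (- int k)). \<forall>z\<in>space (S (- int k)).
              iter_kant S P \<rho>0 k y z =
                kantorovich (S 0) \<rho>0 (cond_law S P k y) (cond_law S P k z) \<and>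
              iter_kant S P \<rho>0 k y z =
                (\<integral>\<omega>. \<rho>0 (propp_wilson f U (- int k) y k \<omega>) (propp_wilson f U (- int k) z k \<omega>) \<partial>M)"
      using iter main_k[OF rho] by simp
    show "pseudometric_on (space (S n)) (iter_kant S P \<rho>0 (nat (- n))) \<and>
           linear_on (space (S n)) (iter_kant S P \<rho>0 (nat (- n))) \<and>
           (\<forall>y\<in>space (S n). \<forall>z\<in>space (S n).
              iter_kant S P \<rho>0 (nat (- n)) y z =
                kantorovich (S 0) \<rho>0 (cond_law S P (nat (- n)) y) (cond_law S P (nat (- n)) z) \<and>
              iter_kant S P \<rho>0 (nat (- n)) y z =
                (\<integral>\<omega>. \<rho>0 (propp_wilson f U n y (nat (- n)) \<omega>) (propp_wilson f U n z (nat (- n)) \<omega>) \<partial>M))"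
      unfolding nk kk' using pm lin rest by blast
  qed
qed

end
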